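(* Let $\mathfrak g$ be a finite-dimensional semisimple Lie algebra and $S\subset\Delta_+$ a nonempty set of positive roots closed under addition within $\Delta_+$. Then $$\widetilde{U(\bar{\mathfrak n}_{S-})}:=\{[\mu]\in\widetilde{U(\bar{\mathfrak n}_S)}:\mu\in F(S),\ \mathrm{Supp}(\mu)\subset M(S)_-\}$$ is isomorphic to $U(\bar{\mathfrak n}_{S-})$.
   Context: $\mathfrak g$ has Cartan subalgebra $\mathfrak h$, roots $\Delta$, positive roots $\Delta_+$; root vectors $x_\alpha$ satisfy $[x_\alpha,x_\beta]=C_{\alpha,\beta}x_{\alpha+\beta}$ ($C_{\alpha,\beta}=0$ if $\alpha+\beta$ is not a root). $S\subset\Delta_+$ nonempty with $\alpha,\beta\in S,\ \alpha+\beta\in\Delta_+\Rightarrow\alpha+\beta\in S$; $\mathfrak n_S=\bigoplus_{\alpha\in S}\mathbb Cx_\alpha$, $\bar{\mathfrak n}_S=\mathfrak n_S\otimes\mathbb C[t,t^{-1}]$ (subalgebra of the untwisted affine algebra $\widehat{\mathfrak g}$), $\bar{\mathfrak n}_{S-}=\mathfrak n_S\otimes t^{-1}\mathbb C[t^{-1}]$, $\bar{\mathfrak n}_{S+}=\mathfrak n_S\otimes\mathbb C[t]$. $M(S)$ is the free monoid on $\mathbb Z\times S$ (words $((m_1,\beta_1),\dots,(m_p,\beta_p))$, concatenation $\circ$); $a\le j$ means $m_l+\cdots+m_p\le j$ for all $l$. For $\mu:M(S)\to\mathbb C$, $\mathrm{Supp}(\mu)=\{a:\mu(a)\ne0\}$,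 $\mathrm{Supp}_j(\mu)=\{a\in\mathrm{Supp}(\mu):a\le j\}$. $F(S)$ is the algebra of $\mu$ with every $\mathrm{Supp}_j(\mu)$ finite, product $(\mu_1\mu_2)(a)=\sum_{a=b\circ c}\mu_1(b)\mu_2(c)$; $X_\beta(m)$ is the indicator of a one-letter word. $\widetilde I_S$ is the two-sided ideal of $F(S)$ generated by $X_\alpha(m)X_\beta(l)-X_\beta(l)X_\alpha(m)-C_{\alpha,\beta}X_{\alpha+\beta}(m+l)$ ($\alpha,\beta\in S$), $\widetilde{U(\bar{\mathfrak n}_S)}=F(S)/\widetilde I_S$, $[\mu]$ the class of $\mu$. $M(S)_-$ is the set of words with all $m_l\le-1$ (including the empty word). *)

theory Defs
  imports Complex_Main "HOL-Algebra.QuotRing"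
begin

definition lie_algebra :: "(complex \<Rightarrow> 'g::ab_group_add \<Rightarrow> 'g) \<Rightarrow> ('g \<Rightarrow> 'g \<Rightarrow> 'g) \<Rightarrow> bool" where
  "lie_algebra sc br \<longleftrightarrow> vector_space sc
     \<and> (\<forall>x y z a b. br (sc a x + sc b y) z = sc a (br x z) + sc b (br y z))
     \<and> (\<forall>x y z a b. br z (sc a x + sc b y) = sc a (br z x) + sc b (br z y))
     \<and> (\<forall>x. br x x = 0)
     \<and> (\<forall>x y z. br x (br y z) + br y (br z x) + br z (br x y) = 0)"

definition fin_dim :: "(complex \<Rightarrow> 'g::ab_group_add \<Rightarrow> 'g) \<Rightarrow> bool" where
  "fin_dim sc \<longleftrightarrow> (\<exists>B. finite B \<and> module.span sc B = UNIV)"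

definition lie_subalgebra :: "(complex \<Rightarrow> 'g::ab_group_add \<Rightarrow> 'g) \<Rightarrow> ('g \<Rightarrow> 'g \<Rightarrow> 'g) \<Rightarrow> 'g set \<Rightarrow> bool" where
  "lie_subalgebra sc br H \<longleftrightarrow> module.subspace sc H \<and> (\<forall>x\<in>H. \<forall>y\<in>H. br x y \<in> H)"

definition lie_ideal :: "(complex \<Rightarrow> 'g::ab_group_add \<Rightarrow> 'g) \<Rightarrow> ('g \<Rightarrow> 'g \<Rightarrow> 'g) \<Rightarrow> 'g set \<Rightarrow> bool" where
  "lie_ideal sc br I \<longleftrightarrow> module.subspace sc I \<and> (\<forall>x. \<forall>y\<in>I. br x y \<in> I)"

definition brspan :: "(complex \<Rightarrow> 'g::ab_group_add \<Rightarrow> 'g) \<Rightarrow> ('g \<Rightarrow> 'g \<Rightarrow> 'g) \<Rightarrow> 'g set \<Rightarrow> 'g set \<Rightarrow> 'g set" where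
  "brspan sc br A B = module.span sc {br x y | x y. x \<in> A \<and> y \<in> B}"

fun derived_series :: "(complex \<Rightarrow> 'g::ab_group_add \<Rightarrow> 'g) \<Rightarrow> ('g \<Rightarrow> 'g \<Rightarrow> 'g) \<Rightarrow> nat \<Rightarrow> 'g set \<Rightarrow> 'g set" where
  "derived_series sc br 0 I = I"
| "derived_series sc br (Suc k) I = brspan sc br (derived_series sc br k I) (derived_series sc br k I)"

fun lower_central :: "(complex \<Rightarrow> 'g::ab_group_add \<Rightarrow> 'g) \<Rightarrow> ('g \<Rightarrow> 'g \<Rightarrow> 'g) \<Rightarrow> nat \<Rightarrow> 'g set \<Rightarrow> 'g set" where
  "lower_central sc br 0 H = H"
| "lower_central sc br (Suc k) H = brspan sc br H (lower_central sc br k H)"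

definition solvable_lie :: "(complex \<Rightarrow> 'g::ab_group_add \<Rightarrow> 'g) \<Rightarrow> ('g \<Rightarrow> 'g \<Rightarrow> 'g) \<Rightarrow> 'g set \<Rightarrow> bool" where
  "solvable_lie sc br I \<longleftrightarrow> (\<exists>k. derived_series sc br k I = {0})"

definition nilpotent_lie :: "(complex \<Rightarrow> 'g::ab_group_add \<Rightarrow> 'g) \<Rightarrow> ('g \<Rightarrow> 'g \<Rightarrow> 'g) \<Rightarrow> 'g set \<Rightarrow> bool" where
  "nilpotent_lie sc br H \<longleftrightarrow> (\<exists>k. lower_central sc br k H = {0})"

definition semisimple_lie :: "(complex \<Rightarrow> 'g::ab_group_add \<Rightarrow> 'g) \<Rightarrow> ('g \<Rightarrow> 'g \<Rightarrow> 'g) \<Rightarrow> bool" where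
  "semisimple_lie sc br \<longleftrightarrow> lie_algebra sc br \<and> fin_dim sc
     \<and> (\<forall>I. lie_ideal sc br I \<and> solvable_lie sc br I \<longrightarrow> I = {0})"

definition normalizer :: "('g \<Rightarrow> 'g \<Rightarrow> 'g) \<Rightarrow> 'g set \<Rightarrow> 'g set" where
  "normalizer br H = {x. \<forall>h\<in>H. br x h \<in> H}"

definition cartan_subalgebra :: "(complex \<Rightarrow> 'g::ab_group_add \<Rightarrow> 'g) \<Rightarrow> ('g \<Rightarrow> 'g \<Rightarrow> 'g) \<Rightarrow> 'g set \<Rightarrow> bool" where
  "cartan_subalgebra sc br H \<longleftrightarrow> lie_subalgebra sc br H \<and> nilpotent_lie sc br H \<and> normalizer br H = H"

text \<open>Linear functionals on H are represented as functions 'g => complex that vanish outside H.\<close>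
definition root_space :: "(complex \<Rightarrow> 'g \<Rightarrow> 'g) \<Rightarrow> ('g \<Rightarrow> 'g \<Rightarrow> 'g) \<Rightarrow> 'g set \<Rightarrow> ('g \<Rightarrow> complex) \<Rightarrow> 'g set" where
  "root_space sc br H \<alpha> = {x. \<forall>h\<in>H. br h x = sc (\<alpha> h) x}"

definition roots :: "(complex \<Rightarrow> 'g::ab_group_add \<Rightarrow> 'g) \<Rightarrow> ('g \<Rightarrow> 'g \<Rightarrow> 'g) \<Rightarrow> 'g set \<Rightarrow> ('g \<Rightarrow> complex) set" where
  "roots sc br H = {\<alpha>. (\<forall>h\<in>H. \<forall>k\<in>H. \<forall>a b. \<alpha> (sc a h + sc b k) = a * \<alpha> h + b * \<alpha> k)
                      \<and> (\<forall>x. x \<notin> H \<longrightarrow> \<alpha> x = 0)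
                      \<and> (\<exists>h\<in>H. \<alpha> h \<noteq> 0)
                      \<and> root_space sc br H \<alpha> \<noteq> {0}}"

definition radd :: "('g \<Rightarrow> complex) \<Rightarrow> ('g \<Rightarrow> complex) \<Rightarrow> 'g \<Rightarrow> complex" where
  "radd \<alpha> \<beta> = (\<lambda>x. \<alpha> x + \<beta> x)"

definition is_base :: "(complex \<Rightarrow> 'g::ab_group_add \<Rightarrow> 'g) \<Rightarrow> ('g \<Rightarrow> 'g \<Rightarrow> 'g) \<Rightarrow> 'g set \<Rightarrow> ('g \<Rightarrow> complex) set \<Rightarrow> bool" where
  "is_base sc br H Bs \<longleftrightarrow> finite Bs \<and> Bs \<subseteq> roots sc br H
     \<and> (\<forall>c. (\<forall>x. (\<Sum>\<pi>\<in>Bs. c \<pi> * \<pi> x) = 0) \<longrightarrow> (\<forall>\<pi>\<in>Bs. c \<pi> = (0::complex)))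
     \<and> (\<forall>\<alpha>\<in>roots sc br H. \<exists>k::('g \<Rightarrow> complex) \<Rightarrow> int.
           ((\<forall>\<pi>\<in>Bs. k \<pi> \<ge> 0) \<or> (\<forall>\<pi>\<in>Bs. k \<pi> \<le> 0))
           \<and> \<alpha> = (\<lambda>x. \<Sum>\<pi>\<in>Bs. of_int (k \<pi>) * \<pi> x))"

definition pos_roots :: "(complex \<Rightarrow> 'g::ab_group_add \<Rightarrow> 'g) \<Rightarrow> ('g \<Rightarrow> 'g \<Rightarrow> 'g) \<Rightarrow> 'g set \<Rightarrow> ('g \<Rightarrow> complex) set \<Rightarrow> ('g \<Rightarrow> complex) set" where
  "pos_roots sc br H Bs = {\<alpha>\<in>roots sc br H. \<exists>k::('g \<Rightarrow> complex) \<Rightarrow> nat.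
           \<alpha> = (\<lambda>x. \<Sum>\<pi>\<in>Bs. of_nat (k \<pi>) * \<pi> x)}"

definition conv :: "('l list \<Rightarrow> complex) \<Rightarrow> ('l list \<Rightarrow> complex) \<Rightarrow> 'l list \<Rightarrow> complex" where
  "conv f g a = (\<Sum>k\<le>length a. f (take k a) * g (drop k a))"

definition word_ring :: "('l list \<Rightarrow> complex) set \<Rightarrow> ('l list \<Rightarrow> complex) ring" where
  "word_ring A = \<lparr>carrier = A, mult = conv, one = (\<lambda>a. if a = [] then 1 else 0),
                   zero = (\<lambda>a. 0), add = (\<lambda>f g a. f a + g a)\<rparr>"

definition word_le :: "(int \<times> 'r) list \<Rightarrow> int \<Rightarrow> bool" where
  "word_le a j \<longleftrightarrow> (\<forall>l<length a. sum_list (map fst (drop l a)) \<le> j)"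

definition Supp :: "('l list \<Rightarrow> complex) \<Rightarrow> 'l list set" where
  "Supp \<mu> = {a. \<mu> a \<noteq> 0}"

definition F_carrier :: "'r set \<Rightarrow> ((int \<times> 'r) list \<Rightarrow> complex) set" where
  "F_carrier S = {\<mu>. Supp \<mu> \<subseteq> lists (UNIV \<times> S) \<and> (\<forall>j. finite {a \<in> Supp \<mu>. word_le a j})}"

definition F_ring :: "'r set \<Rightarrow> ((int \<times> 'r) list \<Rightarrow> complex) ring" where
  "F_ring S = word_ring (F_carrier S)"

definition Xw :: "'r \<Rightarrow> int \<Rightarrow> (int \<times> 'r) list \<Rightarrow> complex" where
  "Xw \<beta> m = (\<lambda>a. if a = [(m, \<beta>)] then 1 else 0)"

definition constw :: "complex \<Rightarrow> 'l list \<Rightarrow> complex" where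
  "constw c = (\<lambda>a. if a = [] then c else 0)"

definition rel :: "(('g \<Rightarrow> complex) \<Rightarrow> ('g \<Rightarrow> complex) \<Rightarrow> complex) \<Rightarrow> ('g \<Rightarrow> complex) \<Rightarrow> ('g \<Rightarrow> complex)
                   \<Rightarrow> int \<Rightarrow> int \<Rightarrow> (int \<times> ('g \<Rightarrow> complex)) list \<Rightarrow> complex" where
  "rel C \<alpha> \<beta> m l = (\<lambda>a. conv (Xw \<alpha> m) (Xw \<beta> l) a - conv (Xw \<beta> l) (Xw \<alpha> m) a
                          - C \<alpha> \<beta> * Xw (radd \<alpha> \<beta>) (m + l) a)"

definition I_tilde :: "('g \<Rightarrow> complex) set \<Rightarrow> (('g \<Rightarrow> complex) \<Rightarrow> ('g \<Rightarrow> complex) \<Rightarrow> complex)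
                       \<Rightarrow> ((int \<times> ('g \<Rightarrow> complex)) list \<Rightarrow> complex) set" where
  "I_tilde S C = genideal (F_ring S) {rel C \<alpha> \<beta> m l | \<alpha> \<beta> m l. \<alpha> \<in> S \<and> \<beta> \<in> S}"

definition U_tilde where
  "U_tilde S C = F_ring S Quot I_tilde S C"

definition M_minus :: "'r set \<Rightarrow> (int \<times> 'r) list set" where
  "M_minus S = lists ({m. m \<le> -1} \<times> S)"

definition U_tilde_minus where
  "U_tilde_minus S C = (U_tilde S C)\<lparr>carrier :=
       {I_tilde S C +>\<^bsub>F_ring S\<^esub> \<mu> | \<mu>. \<mu> \<in> F_carrier S \<and> Supp \<mu> \<subseteq> M_minus S}\<rparr>"

text \<open>U(n_{S-}): universal enveloping algebra of n_S \<otimes> t^{-1}C[t^{-1}], presented as the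
  tensor (= free associative) algebra on the basis x_\<beta> \<otimes> t^m (m \<le> -1, \<beta> \<in> S), i.e. finitely
  supported functions on words in these letters, modulo the ideal generated by
  x \<otimes> y - y \<otimes> x - [x,y] for basis elements x, y.\<close>
definition T_minus_carrier :: "'r set \<Rightarrow> ((int \<times> 'r) list \<Rightarrow> complex) set" where
  "T_minus_carrier S = {\<mu>. finite (Supp \<mu>) \<and> Supp \<mu> \<subseteq> M_minus S}"

definition J_minus where
  "J_minus S C = genideal (word_ring (T_minus_carrier S))
      {rel C \<alpha> \<beta> m l | \<alpha> \<beta> m l. \<alpha> \<in> S \<and> \<beta> \<in> S \<and> m \<le> -1 \<and> l \<le> -1}"

definition U_minus where
  "U_minus S C = word_ring (T_minus_carrier S) Quot J_minus S C"

end

theory Submission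
  imports Defs
begin



lemma conv_assoc: "conv (conv f g) h = conv f (conv g h)"
proof (rule ext)
  fix a :: "'a list"
  let ?n = "length a"
  let ?G = "\<lambda>i j. f (take i a) * g (take j (drop i a)) * h (drop (i+j) a)"
  have "conv (conv f g) h a = (\<Sum>k\<le>?n. \<Sum>i\<le>k. ?G i (k - i))"
    unfolding conv_def
    by (auto simp: sum_distrib_right min_def take_drop intro!: sum.cong)
  also have "\<dots> = (\<Sum>(i,j)\<in>{(i,j). i+j \<le> ?n}. ?G i j)"
    by (rule sum.triangle_reindex_eq[symmetric])
  also have "{(i,j). i+j \<le> ?n} = Sigma {..?n} (\<lambda>i. {..?n - i})" by auto
  also have "(\<Sum>(i,j)\<in>Sigma {..?n} (\<lambda>i. {..?n - i}). ?G i j) = (\<Sum>i\<le>?n. \<Sum>j\<le>?n-i. ?G i j)"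
    by (rule sum.Sigma[symmetric]) auto
  also have "\<dots> = conv f (conv g h) a"
    unfolding conv_def
    by (auto simp: sum_distrib_left mult.assoc add.commute intro!: sum.cong)
  finally show "conv (conv f g) h a = conv f (conv g h) a" .
qed

definition ind :: "'a list \<Rightarrow> 'a list \<Rightarrow> complex" where
  "ind w = (\<lambda>a. if a = w then 1 else 0)"

definition lmul :: "'a \<Rightarrow> ('a list \<Rightarrow> complex) \<Rightarrow> 'a list \<Rightarrow> complex" where
  "lmul y f = (\<lambda>a. case a of [] \<Rightarrow> 0 | z # a' \<Rightarrow> if z = y then f a' else 0)"

lemma conv_one_left: "conv (ind []) f = f"
proof (rule ext)
  fix a :: "'a list"
  show "conv (ind []) f a = f a"
  proof (cases a)
    case Nil then show ?thesis by (simp add: conv_def ind_def)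
  next
    case (Cons x xs)
    have "conv (ind []) f a = ind [] (take 0 a) * f (drop 0 a) + (\<Sum>k<length a. ind [] (take (Suc k) a) * f (drop (Suc k) a))"
      unfolding conv_def by (rule sum.atMost_shift)
    also have "(\<Sum>k<length a. ind [] (take (Suc k) a) * f (drop (Suc k) a)) = 0"
      using Cons by (auto simp: ind_def intro!: sum.neutral)
    finally show ?thesis by (simp add: ind_def)
  qed
qed

lemma conv_one_right: "conv f (ind []) = f"
proof (rule ext)
  fix a :: "'a list"
  have "conv f (ind []) a = (\<Sum>k<length a. f (take k a) * ind [] (drop k a)) + f (take (length a) a) * ind [] (drop (length a) a)"
    unfolding conv_def by (simp add: lessThan_Suc_atMost[symmetric])
  also have "(\<Sum>k<length a. f (take k a) * ind [] (drop k a)) = 0"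
    by (auto simp: ind_def intro!: sum.neutral)
  finally show "conv f (ind []) a = f a" by (simp add: ind_def)
qed

lemma conv_add_left: "conv (\<lambda>a. f a + g a) h = (\<lambda>a. conv f h a + conv g h a)"
  by (auto simp: conv_def distrib_right sum.distrib)

lemma conv_add_right: "conv h (\<lambda>a. f a + g a) = (\<lambda>a. conv h f a + conv h g a)"
  by (auto simp: conv_def distrib_left sum.distrib)

lemma conv_scal_left: "conv (\<lambda>a. c * f a) h = (\<lambda>a. c * conv f h a)"
  by (auto simp: conv_def sum_distrib_left mult.assoc)

lemma conv_scal_right: "conv h (\<lambda>a. c * f a) = (\<lambda>a. c * conv h f a)"
  by (auto simp: conv_def sum_distrib_left mult.assoc mult.left_commute)

lemma conv_diff_left: "conv (\<lambda>a. f a - g a) h = (\<lambda>a. conv f h a - conv g h a)"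
  by (auto simp: conv_def left_diff_distrib sum_subtractf)

lemma conv_diff_right: "conv h (\<lambda>a. f a - g a) = (\<lambda>a. conv h f a - conv h g a)"
  by (auto simp: conv_def right_diff_distrib sum_subtractf)

lemma conv_zero_left: "conv (\<lambda>a. 0) h = (\<lambda>a. 0)"
  by (auto simp: conv_def)

lemma conv_zero_right: "conv h (\<lambda>a. 0) = (\<lambda>a. 0)"
  by (auto simp: conv_def)

lemma conv_lmul: "conv (ind [y]) f = lmul y f"
proof (rule ext)
  fix a
  show "conv (ind [y]) f a = lmul y f a"
  proof (cases a)
    case Nil then show ?thesis by (simp add: conv_def ind_def lmul_def)
  next
    case (Cons x xs)
    have "conv (ind [y]) f a = ind [y] (take 0 a) * f (drop 0 a) + (\<Sum>k<length a. ind [y] (take (Suc k) a) * f (drop (Suc k) a))"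
      unfolding conv_def by (rule sum.atMost_shift)
    also have "(\<Sum>k<length a. ind [y] (take (Suc k) a) * f (drop (Suc k) a)) = (\<Sum>k\<in>{0}. ind [y] (take (Suc k) a) * f (drop (Suc k) a))"
      using Cons by (intro sum.mono_neutral_right) (auto simp: ind_def)
    finally show ?thesis using Cons by (simp add: ind_def lmul_def)
  qed
qed

lemma conv_const: fixes f :: "'a list \<Rightarrow> complex" shows "conv (constw c) f = (\<lambda>a. c * f a)"
proof -
  have "(constw c :: 'a list \<Rightarrow> complex) = (\<lambda>a. c * ind [] a)" by (auto simp: constw_def ind_def)
  then show ?thesis by (simp only: conv_scal_left[of c "ind []" f] conv_one_left)
qed

lemma Xw_ind: "Xw \<beta> m = ind [(m,\<beta>)]"
  by (simp add: Xw_def ind_def)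

lemma conv_ind_ind: "conv (ind b) (ind c) = ind (b @ c)"
proof (induction b)
  case Nil then show ?case by (simp add: conv_one_left)
next
  case (Cons y b)
  have e: "ind (y # b) = conv (ind [y]) (ind b)"
    by (simp add: conv_lmul) (auto simp: lmul_def ind_def split: list.splits)
  have "conv (ind (y # b)) (ind c) = conv (ind [y]) (ind (b @ c))"
    by (simp add: e conv_assoc Cons)
  also have "\<dots> = ind ((y # b) @ c)"
    by (simp add: conv_lmul) (auto simp: lmul_def ind_def split: list.splits)
  finally show ?case .
qed



lemma Supp_conv: "a \<in> Supp (conv f g) \<Longrightarrow> \<exists>b c. a = b @ c \<and> b \<in> Supp f \<and> c \<in> Supp g"
proof -
  assume "a \<in> Supp (conv f g)"
  then have "(\<Sum>k\<le>length a. f (take k a) * g (drop k a)) \<noteq> 0" by (simp add: Supp_def conv_def)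
  from sum.not_neutral_contains_not_neutral[OF this] obtain k where "f (take k a) * g (drop k a) \<noteq> 0" by blast
  then show ?thesis by (intro exI[of _ "take k a"] exI[of _ "drop k a"]) (simp add: Supp_def)
qed

lemma Supp_conv_sub: "Supp (conv f g) \<subseteq> (\<lambda>(b,c). b @ c) ` (Supp f \<times> Supp g)"
  using Supp_conv by fastforce

definition sl :: "(int \<times> 'r) list \<Rightarrow> int" where "sl a = sum_list (map fst a)"

lemma sl_append[simp]: "sl (a @ b) = sl a + sl b" by (simp add: sl_def)
lemma sl_Cons[simp]: "sl (x # b) = fst x + sl b" by (simp add: sl_def)
lemma sl_Nil[simp]: "sl [] = 0" by (simp add: sl_def)

lemma word_le_sl: "word_le a j \<longleftrightarrow> (\<forall>l<length a. sl (drop l a) \<le> j)"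
  by (simp add: word_le_def sl_def)

lemma word_le_append:
  assumes "word_le (b @ c) j"
  shows "word_le c j" "word_le b (j - sl c)"
proof -
  show "word_le c j" unfolding word_le_sl
  proof (intro allI impI)
    fix l assume "l < length c"
    then have lt: "length b + l < length (b @ c)" by simp
    from assms have "\<forall>l<length (b @ c). sl (drop l (b @ c)) \<le> j" by (simp only: word_le_sl)
    with lt have "sl (drop (length b + l) (b @ c)) \<le> j" by blast
    moreover have "drop (length b + l) (b @ c) = drop l c" by simp
    ultimately show "sl (drop l c) \<le> j" by metis
  qed
  show "word_le b (j - sl c)" unfolding word_le_sl
  proof (intro allI impI)
    fix l assume "l < length b"
    then have "l < length (b @ c)" by simp
    with assms have "sl (drop l (b @ c)) \<le> j" by (simp add: word_le_sl)
    with \<open>l < length b\<close> show "sl (drop l b) \<le> j - sl c" by simp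
  qed
qed

lemma word_le_mono: "word_le a j \<Longrightarrow> j \<le> k \<Longrightarrow> word_le a k"
  by (auto simp: word_le_def)

lemma word_le_Cons: "word_le (x # c) j \<Longrightarrow> word_le c j"
  using word_le_append(1)[of "[x]" c j] by simp

lemma word_le_drop: "word_le a j \<Longrightarrow> word_le (drop k a) j"
  by (metis append_take_drop_id word_le_append(1))

definition locfin :: "((int \<times> 'r) list \<Rightarrow> complex) \<Rightarrow> bool" where
  "locfin \<mu> \<longleftrightarrow> (\<forall>j. finite {a \<in> Supp \<mu>. word_le a j})"

lemma finite_Supp_locfin: "finite (Supp \<mu>) \<Longrightarrow> locfin \<mu>"
  by (auto simp: locfin_def)

lemma locfin_conv:
  assumes f: "locfin f" and g: "locfin g"
  shows "locfin (conv f g)"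
  unfolding locfin_def
proof
  fix j
  define Wg where "Wg = {c \<in> Supp g. word_le c j}"
  have fWg: "finite Wg" using g by (simp add: locfin_def Wg_def)
  define m0 where "m0 = (\<Sum>c\<in>Wg. \<bar>sl c\<bar>)"
  define Wf where "Wf = {b \<in> Supp f. word_le b (j + m0)}"
  have fWf: "finite Wf" using f by (simp add: locfin_def Wf_def)
  have "{a \<in> Supp (conv f g). word_le a j} \<subseteq> (\<lambda>(b,c). b @ c) ` (Wf \<times> Wg)"
  proof
    fix a assume a: "a \<in> {a \<in> Supp (conv f g). word_le a j}"
    then obtain b c where abc: "a = b @ c" "b \<in> Supp f" "c \<in> Supp g" using Supp_conv by blast
    with a have c: "c \<in> Wg" using word_le_append(1) by (auto simp: Wg_def)
    have "\<bar>sl c\<bar> \<le> m0" unfolding m0_def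
      using c fWg by (intro member_le_sum) auto
    then have "j - sl c \<le> j + m0" by simp
    then have "b \<in> Wf" using abc a word_le_append(2) word_le_mono by (fastforce simp: Wf_def)
    with c abc show "a \<in> (\<lambda>(b,c). b @ c) ` (Wf \<times> Wg)" by auto
  qed
  then show "finite {a \<in> Supp (conv f g). word_le a j}"
    by (rule finite_subset) (intro finite_imageI finite_cartesian_product fWf fWg)
qed

lemma Supp_add: "Supp (\<lambda>a. f a + g a) \<subseteq> Supp f \<union> Supp g"
  by (auto simp: Supp_def)

lemma Supp_neg[simp]: "Supp (\<lambda>a. - f a) = Supp f"
  by (auto simp: Supp_def)

lemma Supp_scal: "Supp (\<lambda>a. c * f a) \<subseteq> Supp f"
  by (auto simp: Supp_def)

lemma Supp_zero[simp]: "Supp (\<lambda>a. 0) = {}"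
  by (auto simp: Supp_def)

lemma Supp_ind[simp]: "Supp (ind w) = {w}"
  by (auto simp: Supp_def ind_def)

lemma locfin_add: "locfin f \<Longrightarrow> locfin g \<Longrightarrow> locfin (\<lambda>a. f a + g a)"
  unfolding locfin_def
proof
  fix j assume "\<forall>j. finite {a \<in> Supp f. word_le a j}" "\<forall>j. finite {a \<in> Supp g. word_le a j}"
  then have "finite ({a \<in> Supp f. word_le a j} \<union> {a \<in> Supp g. word_le a j})" by auto
  moreover have "{a \<in> Supp (\<lambda>a. f a + g a). word_le a j} \<subseteq> {a \<in> Supp f. word_le a j} \<union> {a \<in> Supp g. word_le a j}"
    using Supp_add by fastforce
  ultimately show "finite {a \<in> Supp (\<lambda>a. f a + g a). word_le a j}" by (rule finite_subset[rotated])
qed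

lemma locfin_scal: "locfin f \<Longrightarrow> locfin (\<lambda>a. c * f a)"
  unfolding locfin_def
proof
  fix j assume "\<forall>j. finite {a \<in> Supp f. word_le a j}"
  then have "finite {a \<in> Supp f. word_le a j}" by blast
  then show "finite {a \<in> Supp (\<lambda>a. c * f a). word_le a j}"
    by (rule finite_subset[rotated]) (auto simp: Supp_def)
qed

lemma locfin_neg: "locfin f \<Longrightarrow> locfin (\<lambda>a. - f a)"
  by (simp add: locfin_def)



lemma word_ring_ring:
  assumes z: "(\<lambda>a. 0) \<in> A" and o: "ind [] \<in> A"
    and ad: "\<And>f g. f \<in> A \<Longrightarrow> g \<in> A \<Longrightarrow> (\<lambda>a. f a + g a) \<in> A"
    and ng: "\<And>f. f \<in> A \<Longrightarrow> (\<lambda>a. - f a) \<in> A"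
    and cv: "\<And>f g. f \<in> A \<Longrightarrow> g \<in> A \<Longrightarrow> conv f g \<in> A"
  shows "ring (word_ring A)"
proof -
  have one: "(\<lambda>a. if a = [] then 1 else 0) = ind []" by (simp add: ind_def)
  show ?thesis
  proof (rule ringI)
    show "abelian_group (word_ring A)"
    proof (rule abelian_groupI)
      fix x assume "x \<in> carrier (word_ring A)"
      then show "\<exists>y\<in>carrier (word_ring A). y \<oplus>\<^bsub>word_ring A\<^esub> x = \<zero>\<^bsub>word_ring A\<^esub>"
        by (intro bexI[of _ "\<lambda>a. - x a"]) (auto simp: word_ring_def ng)
    qed (auto simp: word_ring_def z ad add_ac)
    show "monoid (word_ring A)"
      by (rule monoidI) (auto simp: word_ring_def cv one o conv_assoc conv_one_left conv_one_right)
  qed (auto simp: word_ring_def conv_add_left conv_add_right)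
qed

lemma word_ring_minus:
  assumes "ring (word_ring A)" "f \<in> A"
  shows "\<ominus>\<^bsub>word_ring A\<^esub> f = (\<lambda>a. - f a)"
proof -
  interpret R: ring "word_ring A" by fact
  have "\<ominus>\<^bsub>word_ring A\<^esub> f \<oplus>\<^bsub>word_ring A\<^esub> f = \<zero>\<^bsub>word_ring A\<^esub>"
    using assms(2) R.l_neg by (simp add: word_ring_def)
  then have h: "(\<lambda>a. (\<ominus>\<^bsub>word_ring A\<^esub> f) a + f a) = (\<lambda>a. 0)" by (simp add: word_ring_def)
  show ?thesis
  proof
    fix a
    from fun_cong[OF h, of a] have "(\<ominus>\<^bsub>word_ring A\<^esub> f) a + f a = 0" by simp
    then show "(\<ominus>\<^bsub>word_ring A\<^esub> f) a = - f a" by (simp add: eq_neg_iff_add_eq_0)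
  qed
qed


lemma ideal_wordI:
  assumes R: "ring (word_ring A)" and sub: "K \<subseteq> A" and z: "(\<lambda>a. 0) \<in> K"
    and ad: "\<And>f g. f \<in> K \<Longrightarrow> g \<in> K \<Longrightarrow> (\<lambda>a. f a + g a) \<in> K"
    and ng: "\<And>f. f \<in> K \<Longrightarrow> (\<lambda>a. - f a) \<in> K"
    and lc: "\<And>f h. f \<in> K \<Longrightarrow> h \<in> A \<Longrightarrow> conv h f \<in> K"
    and rc: "\<And>f h. f \<in> K \<Longrightarrow> h \<in> A \<Longrightarrow> conv f h \<in> K"
  shows "ideal K (word_ring A)"
proof -
  interpret R: ring "word_ring A" by fact
  show ?thesis
  proof (rule idealI[OF R])
    show "subgroup K (add_monoid (word_ring A))"
    proof (rule R.add.subgroupI)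
      fix a assume a: "a \<in> K"
      have "\<ominus>\<^bsub>word_ring A\<^esub> a = (\<lambda>x. - a x)"
        using word_ring_minus[OF R, of a] sub a by auto
      then show "\<ominus>\<^bsub>word_ring A\<^esub> a \<in> K" using ng a by simp
    qed (use sub z ad in \<open>auto simp: word_ring_def\<close>)
  qed (auto simp: word_ring_def lc rc)
qed


definition lbr :: "int \<times> ('g \<Rightarrow> complex) \<Rightarrow> int \<times> ('g \<Rightarrow> complex) \<Rightarrow> int \<times> ('g \<Rightarrow> complex)" where
  "lbr p q = (fst p + fst q, radd (snd p) (snd q))"

lemma radd_comm: "radd a b = radd b a" by (auto simp: radd_def add.commute)
lemma radd_assoc: "radd (radd a b) c = radd a (radd b c)" by (auto simp: radd_def add.assoc)
lemma fst_lbr[simp]: "fst (lbr p q) = fst p + fst q" by (simp add: lbr_def)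
lemma snd_lbr[simp]: "snd (lbr p q) = radd (snd p) (snd q)" by (simp add: lbr_def)
lemma lbr_comm: "lbr p q = lbr q p" by (simp add: lbr_def radd_comm add.commute)
lemma lbr_assoc: "lbr (lbr a b) c = lbr a (lbr b c)" by (simp add: lbr_def radd_assoc add.assoc)

fun Aw :: "(('g \<Rightarrow> complex) \<Rightarrow> ('g \<Rightarrow> complex) \<Rightarrow> complex) \<Rightarrow> int \<times> ('g \<Rightarrow> complex)
           \<Rightarrow> (int \<times> ('g \<Rightarrow> complex)) list \<Rightarrow> (int \<times> ('g \<Rightarrow> complex)) list \<Rightarrow> complex" where
  "Aw C l [] = (if fst l \<le> -1 then ind [l] else (\<lambda>a. 0))"
| "Aw C l (y # w) = (if fst l \<le> -1 then ind (l # y # w)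
      else (\<lambda>a. lmul y (Aw C l w) a + C (snd l) (snd y) * Aw C (lbr l y) w a))"

definition lin :: "('a list \<Rightarrow> 'a list \<Rightarrow> complex) \<Rightarrow> ('a list \<Rightarrow> complex) \<Rightarrow> 'a list \<Rightarrow> complex" where
  "lin G f = (\<lambda>a. \<Sum>w\<in>Supp f. f w * G w a)"

definition Aop where "Aop C l f = lin (Aw C l) f"

lemma lin_eq: assumes "finite W" "Supp f \<subseteq> W" shows "lin G f = (\<lambda>a. \<Sum>w\<in>W. f w * G w a)"
  unfolding lin_def by (rule ext, rule sum.mono_neutral_left) (use assms in \<open>auto simp: Supp_def\<close>)

lemma lin_add:
  assumes "finite (Supp f)" "finite (Supp g)"
  shows "lin G (\<lambda>a. f a + g a) = (\<lambda>a. lin G f a + lin G g a)"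
proof -
  let ?W = "Supp f \<union> Supp g"
  have fW: "finite ?W" using assms by simp
  have "lin G (\<lambda>a. f a + g a) = (\<lambda>a. \<Sum>w\<in>?W. (f w + g w) * G w a)"
    by (rule lin_eq[OF fW]) (use Supp_add in auto)
  moreover have "lin G f = (\<lambda>a. \<Sum>w\<in>?W. f w * G w a)" by (rule lin_eq[OF fW]) auto
  moreover have "lin G g = (\<lambda>a. \<Sum>w\<in>?W. g w * G w a)" by (rule lin_eq[OF fW]) auto
  ultimately show ?thesis by (simp add: distrib_right sum.distrib)
qed

lemma lin_scal:
  assumes "finite (Supp f)"
  shows "lin G (\<lambda>a. c * f a) = (\<lambda>a. c * lin G f a)"
proof -
  have "lin G (\<lambda>a. c * f a) = (\<lambda>a. \<Sum>w\<in>Supp f. (c * f w) * G w a)"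
    by (rule lin_eq[OF assms]) (auto simp: Supp_def)
  then show ?thesis by (simp add: lin_def sum_distrib_left mult.assoc)
qed

lemma lin_zero[simp]: "lin G (\<lambda>a. 0) = (\<lambda>a. 0)"
  by (simp add: lin_def)

lemma lin_ind: "lin G (ind w) = G w"
  unfolding lin_def Supp_ind by (simp add: ind_def)

lemma lin_Gadd: "lin (\<lambda>w a. G1 w a + c * G2 w a) f = (\<lambda>a. lin G1 f a + c * lin G2 f a)"
  by (simp add: lin_def distrib_left sum.distrib sum_distrib_left mult.left_commute)

lemma Supp_lmul_iff: "a \<in> Supp (lmul y g) \<longleftrightarrow> (\<exists>a'. a = y # a' \<and> a' \<in> Supp g)"
  by (cases a) (auto simp: Supp_def lmul_def)

lemma Supp_lmul: "Supp (lmul y g) = Cons y ` Supp g"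
  by (auto simp: Supp_lmul_iff)

lemma finite_Supp_lmul: "finite (Supp g) \<Longrightarrow> finite (Supp (lmul y g))"
  by (simp add: Supp_lmul)

lemma lmul_Cons[simp]: "lmul y g (y # a) = g a"
  by (simp add: lmul_def)

lemma lin_lmul:
  shows "lin G (lmul y g) = lin (\<lambda>w. G (y # w)) g"
proof (rule ext)
  fix a
  have "lin G (lmul y g) a = (\<Sum>w\<in>Cons y ` Supp g. lmul y g w * G w a)"
    by (simp add: lin_def Supp_lmul)
  also have "\<dots> = (\<Sum>v\<in>Supp g. lmul y g (y # v) * G (y # v) a)"
    by (rule sum.reindex[unfolded comp_def]) (auto simp: inj_on_def)
  finally show "lin G (lmul y g) a = lin (\<lambda>w. G (y # w)) g a" by (simp add: lin_def)
qed

lemma lmul_lin: "lmul y (lin G g) = lin (\<lambda>w. lmul y (G w)) g"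
  by (rule ext) (auto simp: lmul_def lin_def split: list.splits)

lemma lmul_add: "lmul y (\<lambda>a. f a + g a) = (\<lambda>a. lmul y f a + lmul y g a)"
  by (rule ext) (auto simp: lmul_def split: list.splits)

lemma lmul_scal: "lmul y (\<lambda>a. c * f a) = (\<lambda>a. c * lmul y f a)"
  by (rule ext) (auto simp: lmul_def split: list.splits)

lemma lmul_zero[simp]: "lmul y (\<lambda>a. 0) = (\<lambda>a. 0)"
  by (rule ext) (auto simp: lmul_def split: list.splits)

lemma lmul_ind: "lmul y (ind w) = ind (y # w)"
  by (rule ext) (auto simp: lmul_def ind_def split: list.splits)

lemma lin_ind_self: "finite (Supp f) \<Longrightarrow> lin ind f = f"
proof (rule ext)
  fix a assume "finite (Supp f)"
  have "lin ind f a = (\<Sum>w\<in>Supp f. if w = a then f w else 0)"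
    by (auto simp: lin_def ind_def intro!: sum.cong)
  also have "\<dots> = (if a \<in> Supp f then f a else 0)" using \<open>finite (Supp f)\<close> by (rule sum.delta)
  also have "\<dots> = f a" by (simp add: Supp_def)
  finally show "lin ind f a = f a" .
qed

lemma Supp_sum_sub: "Supp (\<lambda>a. \<Sum>i\<in>I. c i * h i a) \<subseteq> (\<Union>i\<in>I. Supp (h i))"
proof
  fix a assume "a \<in> Supp (\<lambda>a. \<Sum>i\<in>I. c i * h i a)"
  then have "(\<Sum>i\<in>I. c i * h i a) \<noteq> 0" by (simp add: Supp_def)
  from sum.not_neutral_contains_not_neutral[OF this] obtain i where "i \<in> I" "c i * h i a \<noteq> 0" by blast
  then show "a \<in> (\<Union>i\<in>I. Supp (h i))" by (auto simp: Supp_def)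
qed

lemma finite_Supp_sum:
  "finite I \<Longrightarrow> (\<And>i. i \<in> I \<Longrightarrow> finite (Supp (h i))) \<Longrightarrow> finite (Supp (\<lambda>a. \<Sum>i\<in>I. c i * h i a))"
  by (rule finite_subset[OF Supp_sum_sub]) auto

lemma lin_sum:
  assumes "finite I" "\<And>i. i \<in> I \<Longrightarrow> finite (Supp (h i))"
  shows "lin G (\<lambda>a. \<Sum>i\<in>I. c i * h i a) = (\<lambda>a. \<Sum>i\<in>I. c i * lin G (h i) a)"
  using assms
proof (induction I rule: finite_induct)
  case empty then show ?case by simp
next
  case (insert i I)
  have "finite (Supp (h i))" using insert.prems by blast
  then have f1: "finite (Supp (\<lambda>a. c i * h i a))" by (rule finite_subset[OF Supp_scal])
  have f2: "finite (Supp (\<lambda>a. \<Sum>i\<in>I. c i * h i a))" using insert by (intro finite_Supp_sum) auto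
  have "lin G (\<lambda>a. \<Sum>i\<in>insert i I. c i * h i a) = lin G (\<lambda>a. c i * h i a + (\<Sum>i\<in>I. c i * h i a))"
    using insert by simp
  also have "\<dots> = (\<lambda>a. lin G (\<lambda>a. c i * h i a) a + lin G (\<lambda>a. \<Sum>i\<in>I. c i * h i a) a)"
    by (rule lin_add[OF f1 f2])
  also have "\<dots> = (\<lambda>a. c i * lin G (h i) a + (\<Sum>i\<in>I. c i * lin G (h i) a))"
    using insert by (simp add: lin_scal)
  finally show ?case using insert by simp
qed

lemma Supp_lin: "a \<in> Supp (lin G f) \<Longrightarrow> \<exists>w\<in>Supp f. a \<in> Supp (G w)"
  unfolding lin_def using Supp_sum_sub[where I="Supp f" and c=f and h=G] by (auto simp: Supp_def)

lemma finite_Supp_lin: "finite (Supp f) \<Longrightarrow> (\<And>w. finite (Supp (G w))) \<Longrightarrow> finite (Supp (lin G f))"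
  unfolding lin_def by (rule finite_Supp_sum) auto

lemma Aw_minus: "fst l \<le> -1 \<Longrightarrow> Aw C l w = ind (l # w)"
  by (cases w) auto

lemma finite_Supp_Aw: "finite (Supp (Aw C l w))"
proof (induction w arbitrary: l)
  case Nil then show ?case by (simp add: Supp_def ind_def)
next
  case (Cons y w)
  show ?case
  proof (cases "fst l \<le> -1")
    case True then show ?thesis by simp
  next
    case False
    have f1: "finite (Supp (lmul y (Aw C l w)))" by (rule finite_Supp_lmul[OF Cons.IH])
    have f2: "finite (Supp (\<lambda>a. C (snd l) (snd y) * Aw C (lbr l y) w a))"
      by (rule finite_subset[OF Supp_scal Cons.IH])
    have "finite (Supp (\<lambda>a. lmul y (Aw C l w) a + C (snd l) (snd y) * Aw C (lbr l y) w a))"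
      by (rule finite_subset[OF Supp_add]) (use f1 f2 in simp)
    then show ?thesis using False by simp
  qed
qed

lemma finite_Supp_Aop: "finite (Supp f) \<Longrightarrow> finite (Supp (Aop C l f))"
  unfolding Aop_def by (rule finite_Supp_lin) (auto intro: finite_Supp_Aw)

lemma Aop_ind: "Aop C l (ind w) = Aw C l w"
  by (simp add: Aop_def lin_ind)

lemma Aop_minus: assumes "fst l \<le> -1" "finite (Supp f)" shows "Aop C l f = lmul l f"
proof -
  have "Aw C l = (\<lambda>w. ind (l # w))" by (rule ext) (simp add: Aw_minus assms(1))
  then have "Aop C l f = lin (\<lambda>w. lmul l (ind w)) f"
    unfolding Aop_def by (simp add: lmul_ind)
  also have "\<dots> = lmul l (lin ind f)" by (simp add: lmul_lin)
  finally show ?thesis using assms(2) by (simp add: lin_ind_self)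
qed

lemma Aop_plus_lmul:
  assumes "\<not> fst l \<le> -1"
  shows "Aop C l (lmul y g) = (\<lambda>a. lmul y (Aop C l g) a + C (snd l) (snd y) * Aop C (lbr l y) g a)"
proof -
  have "Aop C l (lmul y g) = lin (\<lambda>w. Aw C l (y # w)) g" by (simp add: Aop_def lin_lmul)
  also have "\<dots> = lin (\<lambda>w a. lmul y (Aw C l w) a + C (snd l) (snd y) * Aw C (lbr l y) w a) g"
    using assms by simp
  also have "\<dots> = (\<lambda>a. lin (\<lambda>w. lmul y (Aw C l w)) g a + C (snd l) (snd y) * lin (Aw C (lbr l y)) g a)"
    by (rule lin_Gadd)
  finally show ?thesis by (simp add: Aop_def lmul_lin)
qed

lemma Aop_plus_nil: "\<not> fst l \<le> -1 \<Longrightarrow> Aop C l (ind []) = (\<lambda>a. 0)"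
  by (simp add: Aop_ind)

lemma Aop_add: "finite (Supp f) \<Longrightarrow> finite (Supp g) \<Longrightarrow> Aop C l (\<lambda>a. f a + g a) = (\<lambda>a. Aop C l f a + Aop C l g a)"
  by (simp add: Aop_def lin_add)

lemma Aop_scal: "finite (Supp f) \<Longrightarrow> Aop C l (\<lambda>a. c * f a) = (\<lambda>a. c * Aop C l f a)"
  by (simp add: Aop_def lin_scal)

lemma Aop_zero[simp]: "Aop C l (\<lambda>a. 0) = (\<lambda>a. 0)"
  by (simp add: Aop_def)

lemma Aop_sum: "finite I \<Longrightarrow> (\<And>i. i \<in> I \<Longrightarrow> finite (Supp (h i))) \<Longrightarrow>
   Aop C l (\<lambda>a. \<Sum>i\<in>I. c i * h i a) = (\<lambda>a. \<Sum>i\<in>I. c i * Aop C l (h i) a)"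
  by (simp add: Aop_def lin_sum)

lemma Aw_sl: "a \<in> Supp (Aw C l w) \<Longrightarrow> sl a = fst l + sl w"
proof (induction w arbitrary: l a)
  case Nil then show ?case by (auto simp: Supp_def ind_def split: if_splits)
next
  case (Cons y w)
  show ?case
  proof (cases "fst l \<le> -1")
    case True then show ?thesis using Cons.prems by (auto simp: Supp_def ind_def split: if_splits)
  next
    case False
    then have "a \<in> Supp (lmul y (Aw C l w)) \<or> a \<in> Supp (Aw C (lbr l y) w)"
      using Cons.prems by (auto simp: Supp_def)
    then show ?thesis
    proof
      assume "a \<in> Supp (lmul y (Aw C l w))"
      then obtain a' where "a = y # a'" "a' \<in> Supp (Aw C l w)" by (auto simp: Supp_lmul)
      then show ?thesis using Cons.IH by auto
    next
      assume "a \<in> Supp (Aw C (lbr l y) w)"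
      then show ?thesis using Cons.IH by auto
    qed
  qed
qed

lemma Aop_sl: "a \<in> Supp (Aop C l f) \<Longrightarrow> \<exists>w\<in>Supp f. sl a = fst l + sl w"
proof -
  assume "a \<in> Supp (Aop C l f)"
  then obtain w where "w \<in> Supp f" "a \<in> Supp (Aw C l w)" unfolding Aop_def using Supp_lin by blast
  then show ?thesis using Aw_sl by blast
qed


lemma M_minus_Cons: "(y # w) \<in> M_minus S \<longleftrightarrow> fst y \<le> -1 \<and> snd y \<in> S \<and> w \<in> M_minus S"
  by (cases y) (auto simp: M_minus_def)

lemma M_minus_Nil[simp]: "[] \<in> M_minus S"
  by (simp add: M_minus_def)

lemma M_minus_append: "a \<in> M_minus S \<Longrightarrow> b \<in> M_minus S \<Longrightarrow> a @ b \<in> M_minus S"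
  by (simp add: M_minus_def)

lemma rel_eq: "rel C \<alpha> \<beta> m l = (\<lambda>a. ind [(m,\<alpha>),(l,\<beta>)] a - ind [(l,\<beta>),(m,\<alpha>)] a
      - C \<alpha> \<beta> * ind [(m+l, radd \<alpha> \<beta>)] a)"
  by (simp add: rel_def Xw_ind conv_ind_ind)

locale LA =
  fixes S :: "('g \<Rightarrow> complex) set" and C :: "('g \<Rightarrow> complex) \<Rightarrow> ('g \<Rightarrow> complex) \<Rightarrow> complex"
  assumes H1: "\<lbrakk>\<alpha> \<in> S; \<beta> \<in> S; C \<alpha> \<beta> \<noteq> 0\<rbrakk> \<Longrightarrow> radd \<alpha> \<beta> \<in> S"
    and H2: "\<lbrakk>\<alpha> \<in> S; \<beta> \<in> S\<rbrakk> \<Longrightarrow> C \<alpha> \<beta> = - C \<beta> \<alpha>"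
    and H3: "\<lbrakk>a \<in> S; b \<in> S; y \<in> S\<rbrakk> \<Longrightarrow>
       C a b * C (radd a b) y = C a y * C (radd a y) b + C b y * C a (radd b y)"
begin

abbreviation "T \<equiv> T_minus_carrier S"
abbreviation "J \<equiv> J_minus S C"
abbreviation "A \<equiv> Aop C"

lemma T_iff: "f \<in> T \<longleftrightarrow> finite (Supp f) \<and> Supp f \<subseteq> M_minus S"
  by (simp add: T_minus_carrier_def)

lemma T_finite: "f \<in> T \<Longrightarrow> finite (Supp f)" by (simp add: T_iff)

lemma T_zero: "(\<lambda>a. 0) \<in> T" by (simp add: T_iff)

lemma T_ind: "w \<in> M_minus S \<Longrightarrow> ind w \<in> T" by (simp add: T_iff)

lemma T_add: assumes "f \<in> T" "g \<in> T" shows "(\<lambda>a. f a + g a) \<in> T"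
proof -
  have fin: "finite (Supp (\<lambda>a. f a + g a))" by (rule finite_subset[OF Supp_add]) (use assms in \<open>simp add: T_iff\<close>)
  have "Supp (\<lambda>a. f a + g a) \<subseteq> M_minus S" using Supp_add[of f g] assms by (auto simp: T_iff)
  then show ?thesis using fin by (simp add: T_iff)
qed

lemma T_scal: assumes "f \<in> T" shows "(\<lambda>a. c * f a) \<in> T"
proof -
  have fin: "finite (Supp (\<lambda>a. c * f a))" by (rule finite_subset[OF Supp_scal]) (use assms in \<open>simp add: T_iff\<close>)
  have "Supp (\<lambda>a. c * f a) \<subseteq> M_minus S" using Supp_scal[of c f] assms by (auto simp: T_iff)
  then show ?thesis using fin by (simp add: T_iff)
qed

lemma T_neg: "f \<in> T \<Longrightarrow> (\<lambda>a. - f a) \<in> T"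
  unfolding T_iff by simp

lemma T_conv: "f \<in> T \<Longrightarrow> g \<in> T \<Longrightarrow> conv f g \<in> T"
proof -
  assume f: "f \<in> T" and g: "g \<in> T"
  have "finite ((\<lambda>(b,c). b @ c) ` (Supp f \<times> Supp g))" using f g by (simp add: T_iff)
  moreover have "(\<lambda>(b,c). b @ c) ` (Supp f \<times> Supp g) \<subseteq> M_minus S"
    using f g by (auto simp: T_iff intro!: M_minus_append)
  ultimately have "finite (Supp (conv f g))" "Supp (conv f g) \<subseteq> M_minus S"
    using Supp_conv_sub[of f g] by (auto dest: finite_subset)
  then show ?thesis by (simp add: T_iff)
qed

lemma T_lmul: "f \<in> T \<Longrightarrow> fst y \<le> -1 \<Longrightarrow> snd y \<in> S \<Longrightarrow> lmul y f \<in> T"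
  by (auto simp: T_iff Supp_lmul M_minus_Cons)

lemma T_sum: "finite I \<Longrightarrow> (\<And>i. i \<in> I \<Longrightarrow> h i \<in> T) \<Longrightarrow> (\<lambda>a. \<Sum>i\<in>I. c i * h i a) \<in> T"
proof (induction I rule: finite_induct)
  case empty then show ?case by (simp add: T_zero)
next
  case (insert i I)
  then show ?case by (simp add: T_add T_scal)
qed

lemma T_ring: "ring (word_ring T)"
proof (rule word_ring_ring)
  show "ind [] \<in> T" by (simp add: T_ind)
qed (auto simp: T_zero T_add T_neg T_conv)

lemma rel_T: "\<lbrakk>\<alpha> \<in> S; \<beta> \<in> S; m \<le> -1; l \<le> -1\<rbrakk> \<Longrightarrow> rel C \<alpha> \<beta> m l \<in> T"
proof -
  assume a: "\<alpha> \<in> S" "\<beta> \<in> S" "m \<le> -1" "l \<le> -1"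
  have i1: "ind [(m,\<alpha>),(l,\<beta>)] \<in> T" and i2: "ind [(l,\<beta>),(m,\<alpha>)] \<in> T"
    using a by (auto intro!: T_ind simp: M_minus_def)
  have i3: "(\<lambda>x. C \<alpha> \<beta> * ind [(m+l, radd \<alpha> \<beta>)] x) \<in> T"
  proof (cases "C \<alpha> \<beta> = 0")
    case True then show ?thesis by (simp add: T_zero)
  next
    case False then have "radd \<alpha> \<beta> \<in> S" using H1 a by blast
    then show ?thesis using a by (auto intro!: T_scal T_ind simp: M_minus_def)
  qed
  have "rel C \<alpha> \<beta> m l = (\<lambda>x. (ind [(m,\<alpha>),(l,\<beta>)] x + - ind [(l,\<beta>),(m,\<alpha>)] x) + - (C \<alpha> \<beta> * ind [(m+l, radd \<alpha> \<beta>)] x))"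
    by (simp add: rel_eq)
  also have "\<dots> \<in> T"
    using T_add[OF T_add[OF i1 T_neg[OF i2]] T_neg[OF i3]] by simp
  finally show ?thesis .
qed

definition gensJ where "gensJ = {rel C \<alpha> \<beta> m l | \<alpha> \<beta> m l. \<alpha> \<in> S \<and> \<beta> \<in> S \<and> m \<le> -1 \<and> l \<le> -1}"

lemma gensJ_T: "gensJ \<subseteq> T"
  using rel_T by (auto simp: gensJ_def)

lemma J_def': "J = genideal (word_ring T) gensJ"
  by (simp add: J_minus_def gensJ_def)

lemma J_ideal: "ideal J (word_ring T)"
proof -
  interpret R: ring "word_ring T" by (rule T_ring)
  show ?thesis unfolding J_def' by (rule R.genideal_ideal) (use gensJ_T in \<open>simp add: word_ring_def\<close>)
qed

lemma rel_J: "\<lbrakk>\<alpha> \<in> S; \<beta> \<in> S; m \<le> -1; l \<le> -1\<rbrakk> \<Longrightarrow> rel C \<alpha> \<beta> m l \<in> J"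
proof -
  assume a: "\<alpha> \<in> S" "\<beta> \<in> S" "m \<le> -1" "l \<le> -1"
  interpret R: ring "word_ring T" by (rule T_ring)
  have "gensJ \<subseteq> J" unfolding J_def' by (rule R.genideal_self) (use gensJ_T in \<open>simp add: word_ring_def\<close>)
  moreover have "rel C \<alpha> \<beta> m l \<in> gensJ" using a unfolding gensJ_def by blast
  ultimately show ?thesis by (rule subsetD)
qed

lemma J_minimal: "ideal K (word_ring T) \<Longrightarrow> gensJ \<subseteq> K \<Longrightarrow> J \<subseteq> K"
proof -
  assume "ideal K (word_ring T)" "gensJ \<subseteq> K"
  interpret R: ring "word_ring T" by (rule T_ring)
  show ?thesis unfolding J_def' by (rule R.genideal_minimal) fact+
qed

lemma J_T: "f \<in> J \<Longrightarrow> f \<in> T"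
  using ideal.I_l_closed[OF J_ideal] additive_subgroup.a_subset[OF ideal.axioms(1)[OF J_ideal]]
  by (auto simp: word_ring_def)

lemma J_zero: "(\<lambda>a. 0) \<in> J"
  using additive_subgroup.zero_closed[OF ideal.axioms(1)[OF J_ideal]] by (simp add: word_ring_def)

lemma J_add: "f \<in> J \<Longrightarrow> g \<in> J \<Longrightarrow> (\<lambda>a. f a + g a) \<in> J"
  using additive_subgroup.a_closed[OF ideal.axioms(1)[OF J_ideal]] by (simp add: word_ring_def)

lemma J_lconv: "f \<in> J \<Longrightarrow> h \<in> T \<Longrightarrow> conv h f \<in> J"
  using ideal.I_l_closed[OF J_ideal] by (simp add: word_ring_def)

lemma J_rconv: "f \<in> J \<Longrightarrow> h \<in> T \<Longrightarrow> conv f h \<in> J"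
  using ideal.I_r_closed[OF J_ideal] by (simp add: word_ring_def)

lemma constw_T: "constw c \<in> T"
proof -
  have "Supp (constw c) \<subseteq> {[]}" by (auto simp: Supp_def constw_def)
  then show ?thesis unfolding T_iff by (auto intro: finite_subset)
qed

lemma J_scal: "f \<in> J \<Longrightarrow> (\<lambda>a. c * f a) \<in> J"
  using J_lconv[OF _ constw_T, of f c] by (simp add: conv_const)

lemma J_neg: "f \<in> J \<Longrightarrow> (\<lambda>a. - f a) \<in> J"
  using J_scal[of f "-1"] by simp

lemma J_diff: "f \<in> J \<Longrightarrow> g \<in> J \<Longrightarrow> (\<lambda>a. f a - g a) \<in> J"
  using J_add[OF _ J_neg, of f g] by simp

lemma J_lmul: "f \<in> J \<Longrightarrow> fst y \<le> -1 \<Longrightarrow> snd y \<in> S \<Longrightarrow> lmul y f \<in> J"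
  using J_lconv[of f "ind [y]"] T_ind[of "[y]"] by (simp add: conv_lmul M_minus_Cons)

lemma J_sum: "finite I \<Longrightarrow> (\<And>i. i \<in> I \<Longrightarrow> h i \<in> J) \<Longrightarrow> (\<lambda>a. \<Sum>i\<in>I. c i * h i a) \<in> J"
proof (induction I rule: finite_induct)
  case empty then show ?case by (simp add: J_zero)
next
  case (insert i I)
  then show ?case by (simp add: J_add J_scal)
qed

lemma Aw_M: "w \<in> M_minus S \<Longrightarrow> snd l \<in> S \<Longrightarrow> Supp (Aw C l w) \<subseteq> M_minus S"
proof (induction w arbitrary: l)
  case Nil then show ?case by (auto simp: Supp_def ind_def M_minus_Cons split: if_splits)
next
  case (Cons y w)
  show ?case
  proof (cases "fst l \<le> -1")
    case True then show ?thesis using Cons.prems by (auto simp: Supp_def ind_def M_minus_Cons split: if_splits)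
  next
    case False
    have y: "fst y \<le> -1" "snd y \<in> S" "w \<in> M_minus S" using Cons.prems by (auto simp: M_minus_Cons)
    have s1: "Supp (lmul y (Aw C l w)) \<subseteq> M_minus S"
      using Cons.IH[OF y(3) Cons.prems(2)] y by (auto simp: Supp_lmul M_minus_Cons)
    have s2: "Supp (\<lambda>a. C (snd l) (snd y) * Aw C (lbr l y) w a) \<subseteq> M_minus S"
    proof (cases "C (snd l) (snd y) = 0")
      case True then show ?thesis by simp
    next
      case False
      then have "snd (lbr l y) \<in> S" using H1 Cons.prems y by auto
      then have "Supp (Aw C (lbr l y) w) \<subseteq> M_minus S" by (rule Cons.IH[OF y(3)])
      with Supp_scal show ?thesis by (rule order_trans)
    qed
    have "Supp (\<lambda>a. lmul y (Aw C l w) a + C (snd l) (snd y) * Aw C (lbr l y) w a) \<subseteq> M_minus S"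
      using Supp_add[of "lmul y (Aw C l w)" "\<lambda>a. C (snd l) (snd y) * Aw C (lbr l y) w a"] s1 s2 by auto
    then show ?thesis using False by simp
  qed
qed

lemma A_T: "f \<in> T \<Longrightarrow> snd l \<in> S \<Longrightarrow> A l f \<in> T"
proof -
  assume f: "f \<in> T" and l: "snd l \<in> S"
  have "Supp (A l f) \<subseteq> M_minus S"
  proof
    fix a assume "a \<in> Supp (A l f)"
    then obtain w where "w \<in> Supp f" "a \<in> Supp (Aw C l w)" unfolding Aop_def using Supp_lin by blast
    then show "a \<in> M_minus S" using Aw_M[of w l] f l by (auto simp: T_iff)
  qed
  then show ?thesis using f by (simp add: T_iff finite_Supp_Aop)
qed

end


context LA begin

definition cf :: "int \<times> ('g \<Rightarrow> complex) \<Rightarrow> int \<times> ('g \<Rightarrow> complex) \<Rightarrow> complex" where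
  "cf p q = C (snd p) (snd q)"

definition Com where
  "Com a b f = (\<lambda>x. A a (A b f) x - A b (A a f) x - cf a b * A (lbr a b) f x)"

lemma fS: "finite (Supp f) \<Longrightarrow> finite (Supp (A l f))" by (rule finite_Supp_Aop)

lemma A_lin2: "finite (Supp f) \<Longrightarrow> finite (Supp g) \<Longrightarrow>
    A l (\<lambda>x. f x + c * g x) = (\<lambda>x. A l f x + c * A l g x)"
proof -
  assume f: "finite (Supp f)" and g: "finite (Supp g)"
  have "finite (Supp (\<lambda>x. c * g x))" by (rule finite_subset[OF Supp_scal g])
  then show ?thesis using f g by (simp add: Aop_add Aop_scal)
qed

lemma A_pm_swap:
  assumes "\<not> fst l \<le> -1" "fst y \<le> -1" "finite (Supp h)"
  shows "A l (A y h) = (\<lambda>x. A y (A l h) x + cf l y * A (lbr l y) h x)"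
proof -
  have "A y h = lmul y h" using assms by (simp add: Aop_minus)
  moreover have "A y (A l h) = lmul y (A l h)" using assms by (simp add: Aop_minus fS)
  ultimately show ?thesis using assms by (simp add: Aop_plus_lmul cf_def)
qed

lemma Com_mm:
  assumes "m \<le> -1" "l \<le> -1" "finite (Supp f)"
  shows "Com (m,\<alpha>) (l,\<beta>) f = conv (rel C \<alpha> \<beta> m l) f"
proof -
  have c2: "conv (ind [p, q]) f = lmul p (lmul q f)" for p q
  proof -
    have "ind [p, q] = conv (ind [p]) (ind [q])" by (simp only: conv_ind_ind append.simps)
    then have "conv (ind [p, q]) f = conv (ind [p]) (conv (ind [q]) f)" by (simp only: conv_assoc)
    then show ?thesis by (simp only: conv_lmul)
  qed
  have "conv (rel C \<alpha> \<beta> m l) f = (\<lambda>x. conv (ind [(m,\<alpha>),(l,\<beta>)]) f x - conv (ind [(l,\<beta>),(m,\<alpha>)]) f x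
        - C \<alpha> \<beta> * conv (ind [(m+l, radd \<alpha> \<beta>)]) f x)"
    unfolding rel_eq conv_diff_left conv_scal_left[of "C \<alpha> \<beta>" "ind [(m+l, radd \<alpha> \<beta>)]"] by simp
  also have "\<dots> = (\<lambda>x. lmul (m,\<alpha>) (lmul (l,\<beta>) f) x - lmul (l,\<beta>) (lmul (m,\<alpha>) f) x
        - C \<alpha> \<beta> * lmul (m+l, radd \<alpha> \<beta>) f x)"
    by (simp add: c2 conv_lmul)
  also have "\<dots> = Com (m,\<alpha>) (l,\<beta>) f"
    using assms by (simp add: Com_def Aop_minus finite_Supp_lmul cf_def lbr_def)
  finally show ?thesis by simp
qed

lemma Com_mm_J:
  assumes "fst a \<le> -1" "fst b \<le> -1" "snd a \<in> S" "snd b \<in> S" "f \<in> T"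
  shows "Com a b f \<in> J"
proof -
  obtain m \<alpha> l \<beta> where ab: "a = (m,\<alpha>)" "b = (l,\<beta>)" by (cases a, cases b) auto
  have "Com a b f = conv (rel C \<alpha> \<beta> m l) f" using assms ab by (simp add: Com_mm T_finite)
  also have "\<dots> \<in> J" using assms ab by (auto intro!: J_rconv rel_J)
  finally show ?thesis .
qed

lemma Com_pm:
  assumes "\<not> fst a \<le> -1" "fst b \<le> -1" "finite (Supp f)"
  shows "Com a b f = (\<lambda>x. 0)"
  using assms by (simp add: Com_def A_pm_swap)

lemma Com_mp:
  assumes "fst a \<le> -1" "\<not> fst b \<le> -1" "snd a \<in> S" "snd b \<in> S" "finite (Supp f)"
  shows "Com a b f = (\<lambda>x. 0)"
proof -
  have "cf a b = - cf b a" using H2[of "snd a" "snd b"] assms by (simp add: cf_def)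
  then show ?thesis using assms by (simp add: Com_def A_pm_swap lbr_comm)
qed

lemma J_scal0: "c = 0 \<or> h \<in> J \<Longrightarrow> (\<lambda>x. c * h x) \<in> J"
proof (cases "c = 0")
  case True then show ?thesis by (simp add: J_zero)
next
  case False
  assume "c = 0 \<or> h \<in> J"
  with False have "h \<in> J" by simp
  then show ?thesis by (rule J_scal)
qed

lemma Com_pp_step:
  assumes a: "\<not> fst a \<le> -1" and b: "\<not> fst b \<le> -1" and g: "finite (Supp g)"
  shows "Com a b (lmul y g) = (\<lambda>x. lmul y (Com a b g) x + cf a y * Com (lbr a y) b g x
     + cf b y * Com a (lbr b y) g x
     + (cf a y * cf (lbr a y) b + cf b y * cf a (lbr b y) - cf a b * cf (lbr a b) y) * A (lbr (lbr a b) y) g x)"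
proof -
  have ab: "\<not> fst (lbr a b) \<le> -1" using a b by simp
  have s1: "lbr (lbr a y) b = lbr (lbr a b) y" by (metis lbr_assoc lbr_comm)
  have s2: "lbr a (lbr b y) = lbr (lbr a b) y" by (simp add: lbr_assoc)
  have eb: "A b (lmul y g) = (\<lambda>x. lmul y (A b g) x + cf b y * A (lbr b y) g x)"
    using b by (simp add: Aop_plus_lmul cf_def)
  have ea: "A a (lmul y g) = (\<lambda>x. lmul y (A a g) x + cf a y * A (lbr a y) g x)"
    using a by (simp add: Aop_plus_lmul cf_def)
  have eab: "A (lbr a b) (lmul y g) = (\<lambda>x. lmul y (A (lbr a b) g) x + cf (lbr a b) y * A (lbr (lbr a b) y) g x)"
    using ab by (simp add: Aop_plus_lmul cf_def)
  have e1: "A a (A b (lmul y g)) = (\<lambda>x. lmul y (A a (A b g)) x + cf a y * A (lbr a y) (A b g) x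
       + cf b y * A a (A (lbr b y) g) x)"
    unfolding eb using a g by (simp add: A_lin2 fS finite_Supp_lmul Aop_plus_lmul cf_def)
  have e2: "A b (A a (lmul y g)) = (\<lambda>x. lmul y (A b (A a g)) x + cf b y * A (lbr b y) (A a g) x
       + cf a y * A b (A (lbr a y) g) x)"
    unfolding ea using b g by (simp add: A_lin2 fS finite_Supp_lmul Aop_plus_lmul cf_def)
  show ?thesis
    unfolding Com_def e1 e2 eab s1 s2
  proof (rule ext)
    fix x show "lmul y (A a (A b g)) x + cf a y * A (lbr a y) (A b g) x + cf b y * A a (A (lbr b y) g) x -
          (lmul y (A b (A a g)) x + cf b y * A (lbr b y) (A a g) x + cf a y * A b (A (lbr a y) g) x) -
          cf a b * (lmul y (A (lbr a b) g) x + cf (lbr a b) y * A (lbr (lbr a b) y) g x) =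
          lmul y (\<lambda>x. A a (A b g) x - A b (A a g) x - cf a b * A (lbr a b) g x) x +
          cf a y * (A (lbr a y) (A b g) x - A b (A (lbr a y) g) x - cf (lbr a y) b * A (lbr (lbr a b) y) g x) +
          cf b y * (A a (A (lbr b y) g) x - A (lbr b y) (A a g) x - cf a (lbr b y) * A (lbr (lbr a b) y) g x) +
          (cf a y * cf (lbr a y) b + cf b y * cf a (lbr b y) - cf a b * cf (lbr a b) y) * A (lbr (lbr a b) y) g x"
      by (cases x) (simp_all add: lmul_def algebra_simps)
  qed
qed

lemma Comm_word:
  "w \<in> M_minus S \<Longrightarrow> snd a \<in> S \<Longrightarrow> snd b \<in> S \<Longrightarrow> Com a b (ind w) \<in> J"
proof (induction w arbitrary: a b)
  case Nil
  have fin: "finite (Supp (ind []))" by simp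
  show ?case
  proof (cases "fst a \<le> -1")
    case True
    show ?thesis
    proof (cases "fst b \<le> -1")
      case True then show ?thesis using \<open>fst a \<le> -1\<close> Nil by (intro Com_mm_J) (auto intro: T_ind)
    next
      case False then show ?thesis using \<open>fst a \<le> -1\<close> Nil fin by (simp add: Com_mp J_zero)
    qed
  next
    case False
    show ?thesis
    proof (cases "fst b \<le> -1")
      case True then show ?thesis using False Nil fin by (simp add: Com_pm J_zero)
    next
      case nb: False
      have "Com a b (ind []) = (\<lambda>x. 0)" using False nb by (simp add: Com_def Aop_plus_nil)
      then show ?thesis by (simp add: J_zero)
    qed
  qed
next
  case (Cons y w)
  have y: "fst y \<le> -1" "snd y \<in> S" and w: "w \<in> M_minus S" using Cons.prems by (auto simp: M_minus_Cons)
  have fin: "finite (Supp (ind (y # w)))" by simp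
  show ?case
  proof (cases "fst a \<le> -1")
    case True
    show ?thesis
    proof (cases "fst b \<le> -1")
      case True then show ?thesis using \<open>fst a \<le> -1\<close> Cons.prems by (intro Com_mm_J) (auto intro: T_ind)
    next
      case False then show ?thesis using \<open>fst a \<le> -1\<close> Cons.prems fin by (simp add: Com_mp J_zero)
    qed
  next
    case False
    show ?thesis
    proof (cases "fst b \<le> -1")
      case True then show ?thesis using False Cons.prems fin by (simp add: Com_pm J_zero)
    next
      case nb: False
      have coef: "cf a y * cf (lbr a y) b + cf b y * cf a (lbr b y) - cf a b * cf (lbr a b) y = 0"
        using H3[of "snd a" "snd b" "snd y"] Cons.prems y by (simp add: cf_def)
      have t1: "lmul y (Com a b (ind w)) \<in> J" using Cons.IH[OF w Cons.prems(2,3)] y by (rule J_lmul)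
      have t2: "(\<lambda>x. cf a y * Com (lbr a y) b (ind w) x) \<in> J"
      proof (rule J_scal0)
        show "cf a y = 0 \<or> Com (lbr a y) b (ind w) \<in> J"
        proof (cases "cf a y = 0")
          case False
          then have "snd (lbr a y) \<in> S" using H1 Cons.prems y by (auto simp: cf_def)
          then show ?thesis using Cons.IH[OF w] Cons.prems by blast
        qed simp
      qed
      have t3: "(\<lambda>x. cf b y * Com a (lbr b y) (ind w) x) \<in> J"
      proof (rule J_scal0)
        show "cf b y = 0 \<or> Com a (lbr b y) (ind w) \<in> J"
        proof (cases "cf b y = 0")
          case False
          then have "snd (lbr b y) \<in> S" using H1 Cons.prems y by (auto simp: cf_def)
          then show ?thesis using Cons.IH[OF w] Cons.prems by blast
        qed simp
      qed
      have "Com a b (ind (y # w)) = Com a b (lmul y (ind w))" by (simp add: lmul_ind)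
      also have "\<dots> = (\<lambda>x. lmul y (Com a b (ind w)) x + cf a y * Com (lbr a y) b (ind w) x
           + cf b y * Com a (lbr b y) (ind w) x + 0 * A (lbr (lbr a b) y) (ind w) x)"
        using Com_pp_step[OF False nb, of "ind w" y] coef by simp
      also have "\<dots> \<in> J"
        using J_add[OF J_add[OF J_add[OF t1 t2] t3] J_scal0[of 0]] by simp
      finally show ?thesis .
    qed
  qed
qed

end


lemma fun_expand: "finite (Supp f) \<Longrightarrow> f = (\<lambda>x. \<Sum>w\<in>Supp f. f w * ind w x)"
  using lin_ind_self[of f] by (simp add: lin_def)

lemma conv_sum_left: "finite I \<Longrightarrow> conv (\<lambda>x. \<Sum>i\<in>I. c i * g i x) f = (\<lambda>x. \<Sum>i\<in>I. c i * conv (g i) f x)"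
proof (induction I rule: finite_induct)
  case empty then show ?case by (simp add: conv_zero_left)
next
  case (insert i I)
  have "conv (\<lambda>x. \<Sum>i\<in>insert i I. c i * g i x) f = conv (\<lambda>x. c i * g i x + (\<Sum>i\<in>I. c i * g i x)) f"
    using insert by simp
  also have "\<dots> = (\<lambda>x. c i * conv (g i) f x + conv (\<lambda>x. \<Sum>i\<in>I. c i * g i x) f x)"
    by (simp add: conv_add_left conv_scal_left)
  finally show ?case using insert by simp
qed

context LA begin

lemma A_lin3: "finite (Supp f) \<Longrightarrow> finite (Supp g) \<Longrightarrow> finite (Supp h) \<Longrightarrow>
    A l (\<lambda>x. f x - g x - c * h x) = (\<lambda>x. A l f x - A l g x - c * A l h x)"
proof -
  assume f: "finite (Supp f)" and g: "finite (Supp g)" and h: "finite (Supp h)"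
  have e: "(\<lambda>x. f x - g x - c * h x) = (\<lambda>x. (\<lambda>x. f x + (-1) * g x) x + (-c) * h x)" by simp
  have fg: "finite (Supp (\<lambda>x. f x + (-1) * g x))"
    by (rule finite_subset[OF Supp_add]) (use f g finite_subset[OF Supp_scal g] in auto)
  show ?thesis unfolding e A_lin2[OF fg h] A_lin2[OF f g] by simp
qed

lemma Com_sum:
  assumes "finite I" "\<And>i. i \<in> I \<Longrightarrow> finite (Supp (h i))"
  shows "Com a b (\<lambda>x. \<Sum>i\<in>I. c i * h i x) = (\<lambda>x. \<Sum>i\<in>I. c i * Com a b (h i) x)"
proof -
  have s1: "A b (\<lambda>x. \<Sum>i\<in>I. c i * h i x) = (\<lambda>x. \<Sum>i\<in>I. c i * A b (h i) x)" using assms by (rule Aop_sum)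
  have s2: "A a (\<lambda>x. \<Sum>i\<in>I. c i * h i x) = (\<lambda>x. \<Sum>i\<in>I. c i * A a (h i) x)" using assms by (rule Aop_sum)
  have s3: "A (lbr a b) (\<lambda>x. \<Sum>i\<in>I. c i * h i x) = (\<lambda>x. \<Sum>i\<in>I. c i * A (lbr a b) (h i) x)" using assms by (rule Aop_sum)
  have s4: "A a (\<lambda>x. \<Sum>i\<in>I. c i * A b (h i) x) = (\<lambda>x. \<Sum>i\<in>I. c i * A a (A b (h i)) x)"
    using assms by (intro Aop_sum) (auto intro: fS)
  have s5: "A b (\<lambda>x. \<Sum>i\<in>I. c i * A a (h i) x) = (\<lambda>x. \<Sum>i\<in>I. c i * A b (A a (h i)) x)"
    using assms by (intro Aop_sum) (auto intro: fS)
  show ?thesis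
    unfolding Com_def s1 s2 s3 s4 s5
    by (rule ext) (simp add: sum_subtractf sum_distrib_left right_diff_distrib mult.left_commute)
qed

lemma Comm: "f \<in> T \<Longrightarrow> snd a \<in> S \<Longrightarrow> snd b \<in> S \<Longrightarrow> Com a b f \<in> J"
proof -
  assume f: "f \<in> T" and ab: "snd a \<in> S" "snd b \<in> S"
  have fin: "finite (Supp f)" using f by (rule T_finite)
  have "Com a b f = Com a b (\<lambda>x. \<Sum>w\<in>Supp f. f w * ind w x)" using fun_expand[OF fin] by simp
  also have "\<dots> = (\<lambda>x. \<Sum>w\<in>Supp f. f w * Com a b (ind w) x)" using fin by (intro Com_sum) auto
  also have "\<dots> \<in> J"
  proof (rule J_sum[OF fin])
    fix w assume "w \<in> Supp f"
    then have "w \<in> M_minus S" using f by (auto simp: T_iff)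
    then show "Com a b (ind w) \<in> J" using ab by (rule Comm_word)
  qed
  finally show ?thesis .
qed

lemma H3': "\<lbrakk>l \<in> S; y \<in> S; z \<in> S\<rbrakk> \<Longrightarrow>
   C y z * C l (radd y z) = C l z * C y (radd l z) + C l y * C (radd l y) z"
proof -
  assume s: "l \<in> S" "y \<in> S" "z \<in> S"
  have h: "C y z * C (radd y z) l = C y l * C (radd y l) z + C z l * C y (radd z l)"
    using H3[OF s(2) s(3) s(1)] .
  have a1: "C y l = - C l y" using H2[OF s(2) s(1)] .
  have a2: "C z l = - C l z" using H2[OF s(3) s(1)] .
  have r1: "radd y l = radd l y" "radd z l = radd l z" by (simp_all add: radd_comm)
  show ?thesis
  proof (cases "C y z = 0")
    case True
    then show ?thesis using h a1 a2 r1 by (simp add: algebra_simps)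
  next
    case False
    then have "radd y z \<in> S" using H1 s by blast
    then have "C l (radd y z) = - C (radd y z) l" using H2 s by blast
    then have "C y z * C l (radd y z) = - (C y z * C (radd y z) l)" by simp
    also have "\<dots> = - (C y l * C (radd y l) z + C z l * C y (radd z l))" by (simp only: h)
    also have "\<dots> = C l z * C y (radd l z) + C l y * C (radd l y) z" by (simp add: a1 a2 r1 algebra_simps)
    finally show ?thesis .
  qed
qed

lemma A_Com_mm:
  assumes p: "\<not> fst p \<le> -1" and y: "fst y \<le> -1" and z: "fst z \<le> -1" and v: "finite (Supp v)"
  shows "A p (Com y z v) = (\<lambda>x. Com y z (A p v) x + cf p z * Com y (lbr p z) v x + cf p y * Com (lbr p y) z v x
     + (cf p z * cf y (lbr p z) + cf p y * cf (lbr p y) z - cf y z * cf p (lbr y z)) * A (lbr p (lbr y z)) v x)"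
proof -
  have yz: "fst (lbr y z) \<le> -1" using y z by simp
  have l1: "lbr y (lbr p z) = lbr p (lbr y z)" by (metis lbr_assoc lbr_comm)
  have l2: "lbr (lbr p y) z = lbr p (lbr y z)" by (simp add: lbr_assoc)
  have fAz: "finite (Supp (A z v))" and fAy: "finite (Supp (A y v))" and fAp: "finite (Supp (A p v))"
    and fApz: "finite (Supp (A (lbr p z) v))" and fApy: "finite (Supp (A (lbr p y) v))"
    using v by (simp_all add: fS)
  have e0: "A p (Com y z v) = (\<lambda>x. A p (A y (A z v)) x - A p (A z (A y v)) x - cf y z * A p (A (lbr y z) v) x)"
    unfolding Com_def using v by (intro A_lin3) (simp_all add: fS)
  have e1: "A p (A y (A z v)) = (\<lambda>x. A y (A p (A z v)) x + cf p y * A (lbr p y) (A z v) x)"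
    using p y fAz by (rule A_pm_swap)
  have e2: "A p (A z v) = (\<lambda>x. A z (A p v) x + cf p z * A (lbr p z) v x)"
    using p z v by (rule A_pm_swap)
  have e3: "A y (A p (A z v)) = (\<lambda>x. A y (A z (A p v)) x + cf p z * A y (A (lbr p z) v) x)"
    unfolding e2 by (intro A_lin2) (simp_all add: fS fAp fApz)
  have e4: "A p (A z (A y v)) = (\<lambda>x. A z (A p (A y v)) x + cf p z * A (lbr p z) (A y v) x)"
    using p z fAy by (rule A_pm_swap)
  have e5: "A p (A y v) = (\<lambda>x. A y (A p v) x + cf p y * A (lbr p y) v x)"
    using p y v by (rule A_pm_swap)
  have e6: "A z (A p (A y v)) = (\<lambda>x. A z (A y (A p v)) x + cf p y * A z (A (lbr p y) v) x)"
    unfolding e5 by (intro A_lin2) (simp_all add: fS fAp fApy)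
  have e7: "A p (A (lbr y z) v) = (\<lambda>x. A (lbr y z) (A p v) x + cf p (lbr y z) * A (lbr p (lbr y z)) v x)"
    using p yz v by (rule A_pm_swap)
  show ?thesis
    unfolding e0 e1 e3 e4 e6 e7
    unfolding Com_def l1 l2
    by (rule ext) (simp add: algebra_simps)
qed

definition Qs where "Qs = {f. f \<in> J \<and> (\<forall>l. snd l \<in> S \<longrightarrow> A l f \<in> J)}"

lemma Q_J: "f \<in> Qs \<Longrightarrow> f \<in> J" by (simp add: Qs_def)

lemma Q_A: "f \<in> Qs \<Longrightarrow> snd l \<in> S \<Longrightarrow> A l f \<in> J" unfolding Qs_def by blast

lemma QsI: "f \<in> J \<Longrightarrow> (\<And>l. snd l \<in> S \<Longrightarrow> A l f \<in> J) \<Longrightarrow> f \<in> Qs" unfolding Qs_def by blast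

lemma Q_zero: "(\<lambda>x. 0) \<in> Qs" by (simp add: Qs_def J_zero)

lemma Q_add: "f \<in> Qs \<Longrightarrow> g \<in> Qs \<Longrightarrow> (\<lambda>x. f x + g x) \<in> Qs"
  unfolding Qs_def using J_T T_finite by (auto simp: Aop_add intro!: J_add)

lemma Q_scal: "f \<in> Qs \<Longrightarrow> (\<lambda>x. c * f x) \<in> Qs"
  unfolding Qs_def using J_T T_finite by (auto simp: Aop_scal intro!: J_scal)

lemma Q_neg: "f \<in> Qs \<Longrightarrow> (\<lambda>x. - f x) \<in> Qs"
  using Q_scal[of f "-1"] by simp

lemma Q_sum: "finite I \<Longrightarrow> (\<And>i. i \<in> I \<Longrightarrow> h i \<in> Qs) \<Longrightarrow> (\<lambda>a. \<Sum>i\<in>I. c i * h i a) \<in> Qs"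
proof (induction I rule: finite_induct)
  case empty then show ?case by (simp add: Q_zero)
next
  case (insert i I)
  then show ?case by (simp add: Q_add Q_scal)
qed

lemma Q_lmul:
  assumes f: "f \<in> Qs" and y: "fst y \<le> -1" "snd y \<in> S"
  shows "lmul y f \<in> Qs"
proof -
  have fJ: "f \<in> J" using f by (simp add: Qs_def)
  have fin: "finite (Supp f)" using J_T[OF fJ] by (rule T_finite)
  have "A l (lmul y f) \<in> J" if l: "snd l \<in> S" for l
  proof (cases "fst l \<le> -1")
    case True
    then have "A l (lmul y f) = lmul l (lmul y f)" by (simp add: Aop_minus finite_Supp_lmul fin)
    then show ?thesis using J_lmul[OF J_lmul[OF fJ y] True l] by simp
  next
    case False
    have t1: "lmul y (A l f) \<in> J" using Q_A[OF f l] y by (rule J_lmul)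
    have t2: "(\<lambda>x. C (snd l) (snd y) * A (lbr l y) f x) \<in> J"
    proof (rule J_scal0)
      show "C (snd l) (snd y) = 0 \<or> A (lbr l y) f \<in> J"
      proof (cases "C (snd l) (snd y) = 0")
        case False
        then have "snd (lbr l y) \<in> S" using H1 l y by auto
        then show ?thesis using Q_A[OF f] by simp
      qed simp
    qed
    show ?thesis using False J_add[OF t1 t2] by (simp add: Aop_plus_lmul)
  qed
  then show ?thesis using J_lmul[OF fJ y] by (intro QsI)
qed

lemma Q_word: "w \<in> M_minus S \<Longrightarrow> f \<in> Qs \<Longrightarrow> conv (ind w) f \<in> Qs"
proof (induction w)
  case Nil then show ?case by (simp add: conv_one_left)
next
  case (Cons y w)
  have y: "fst y \<le> -1" "snd y \<in> S" and w: "w \<in> M_minus S" using Cons.prems by (auto simp: M_minus_Cons)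
  have "conv (ind (y # w)) f = conv (conv (ind [y]) (ind w)) f" by (simp only: conv_ind_ind append.simps)
  also have "\<dots> = lmul y (conv (ind w) f)" by (subst conv_assoc) (rule conv_lmul)
  finally show ?case using Q_lmul[OF Cons.IH[OF w Cons.prems(2)] y] by simp
qed

lemma Q_lconv: "h \<in> T \<Longrightarrow> f \<in> Qs \<Longrightarrow> conv h f \<in> Qs"
proof -
  assume h: "h \<in> T" and f: "f \<in> Qs"
  have fin: "finite (Supp h)" using h by (rule T_finite)
  have "conv h f = conv (\<lambda>x. \<Sum>w\<in>Supp h. h w * ind w x) f" using fun_expand[OF fin] by simp
  also have "\<dots> = (\<lambda>x. \<Sum>w\<in>Supp h. h w * conv (ind w) f x)" using fin by (rule conv_sum_left)
  also have "\<dots> \<in> Qs"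
  proof (rule Q_sum[OF fin])
    fix w assume "w \<in> Supp h"
    then have "w \<in> M_minus S" using h by (auto simp: T_iff)
    then show "conv (ind w) f \<in> Qs" using f by (rule Q_word)
  qed
  finally show ?thesis .
qed

lemma gen_Q:
  assumes s: "\<alpha> \<in> S" "\<beta> \<in> S" and ml: "m \<le> -1" "l \<le> -1" and v: "v \<in> T"
  shows "conv (rel C \<alpha> \<beta> m l) v \<in> Qs"
proof -
  have fin: "finite (Supp v)" using v by (rule T_finite)
  have e: "conv (rel C \<alpha> \<beta> m l) v = Com (m,\<alpha>) (l,\<beta>) v" using ml fin by (simp add: Com_mm)
  have J1: "Com (m,\<alpha>) (l,\<beta>) v \<in> J" unfolding e[symmetric] using s ml v by (intro J_rconv rel_J)
  have "A p (Com (m,\<alpha>) (l,\<beta>) v) \<in> J" if p: "snd p \<in> S" for p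
  proof (cases "fst p \<le> -1")
    case True
    then have "A p (Com (m,\<alpha>) (l,\<beta>) v) = lmul p (Com (m,\<alpha>) (l,\<beta>) v)"
      using J_T[OF J1] by (simp add: Aop_minus T_finite)
    then show ?thesis using J_lmul[OF J1 True p] by simp
  next
    case False
    let ?y = "(m,\<alpha>)" and ?z = "(l,\<beta>)"
    have coef: "cf p ?z * cf ?y (lbr p ?z) + cf p ?y * cf (lbr p ?y) ?z - cf ?y ?z * cf p (lbr ?y ?z) = 0"
      using H3'[OF p s] by (simp add: cf_def)
    have t1: "Com ?y ?z (A p v) \<in> J" using ml s v p by (intro Com_mm_J) (auto intro: A_T)
    have t2: "(\<lambda>x. cf p ?z * Com ?y (lbr p ?z) v x) \<in> J"
    proof (rule J_scal0)
      show "cf p ?z = 0 \<or> Com ?y (lbr p ?z) v \<in> J"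
      proof (cases "cf p ?z = 0")
        case False
        then have "snd (lbr p ?z) \<in> S" using H1 p s by (auto simp: cf_def)
        then show ?thesis using Comm[OF v] s by simp
      qed simp
    qed
    have t3: "(\<lambda>x. cf p ?y * Com (lbr p ?y) ?z v x) \<in> J"
    proof (rule J_scal0)
      show "cf p ?y = 0 \<or> Com (lbr p ?y) ?z v \<in> J"
      proof (cases "cf p ?y = 0")
        case False
        then have "snd (lbr p ?y) \<in> S" using H1 p s by (auto simp: cf_def)
        then show ?thesis using Comm[OF v] s by simp
      qed simp
    qed
    have "A p (Com ?y ?z v) = (\<lambda>x. Com ?y ?z (A p v) x + cf p ?z * Com ?y (lbr p ?z) v x
        + cf p ?y * Com (lbr p ?y) ?z v x + 0 * A (lbr p (lbr ?y ?z)) v x)"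
      using A_Com_mm[OF False _ _ fin, of ?y ?z] ml coef by simp
    also have "\<dots> \<in> J"
      using J_add[OF J_add[OF J_add[OF t1 t2] t3] J_scal0[of 0]] by simp
    finally show ?thesis .
  qed
  then show ?thesis using J1 e by (auto intro: QsI)
qed

definition Rs where "Rs = {f \<in> T. \<forall>v\<in>T. conv f v \<in> Qs}"

lemma Rs_ideal: "ideal Rs (word_ring T)"
proof (rule ideal_wordI[OF T_ring])
  show "Rs \<subseteq> T" by (auto simp: Rs_def)
  show "(\<lambda>a. 0) \<in> Rs" by (simp add: Rs_def T_zero conv_zero_left Q_zero)
  fix f assume f: "f \<in> Rs"
  {
    fix g assume g: "g \<in> Rs"
    show "(\<lambda>a. f a + g a) \<in> Rs" using f g by (auto simp: Rs_def T_add conv_add_left intro!: Q_add)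
  }
  show "(\<lambda>a. - f a) \<in> Rs"
  proof -
    have "conv (\<lambda>a. - f a) v = (\<lambda>a. (-1) * conv f v a)" for v
      using conv_scal_left[of "-1" f v] by simp
    then show ?thesis using f by (auto simp: Rs_def T_neg intro!: Q_neg)
  qed
  fix h assume h: "h \<in> T"
  show "conv h f \<in> Rs" unfolding Rs_def
  proof (intro CollectI conjI ballI)
    show "conv h f \<in> T" using f h by (simp add: Rs_def T_conv)
    fix v assume v: "v \<in> T"
    have "conv f v \<in> Qs" using f v by (simp add: Rs_def)
    then have "conv h (conv f v) \<in> Qs" by (rule Q_lconv[OF h])
    then show "conv (conv h f) v \<in> Qs" by (simp add: conv_assoc)
  qed
  show "conv f h \<in> Rs" using f h by (auto simp: Rs_def T_conv conv_assoc)
qed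

lemma J_Rs: "J \<subseteq> Rs"
proof (rule J_minimal[OF Rs_ideal])
  show "gensJ \<subseteq> Rs"
  proof
    fix g assume "g \<in> gensJ"
    then obtain \<alpha> \<beta> m l where g: "g = rel C \<alpha> \<beta> m l" "\<alpha> \<in> S" "\<beta> \<in> S" "m \<le> -1" "l \<le> -1"
      by (auto simp: gensJ_def)
    then show "g \<in> Rs" by (auto simp: Rs_def rel_T intro!: gen_Q)
  qed
qed

lemma Pres: "f \<in> J \<Longrightarrow> snd l \<in> S \<Longrightarrow> A l f \<in> J"
proof -
  assume f: "f \<in> J" and l: "snd l \<in> S"
  then have "f \<in> Rs" using J_Rs by blast
  then have "conv f (ind []) \<in> Qs" by (auto simp: Rs_def T_ind)
  then show ?thesis using l Q_A by (simp add: conv_one_right)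
qed

end


fun Act :: "(('g \<Rightarrow> complex) \<Rightarrow> ('g \<Rightarrow> complex) \<Rightarrow> complex) \<Rightarrow> (int \<times> ('g \<Rightarrow> complex)) list
     \<Rightarrow> ((int \<times> ('g \<Rightarrow> complex)) list \<Rightarrow> complex) \<Rightarrow> (int \<times> ('g \<Rightarrow> complex)) list \<Rightarrow> complex" where
  "Act C [] f = f"
| "Act C (l # c) f = Aop C l (Act C c f)"

definition dep :: "((int \<times> 'r) list \<Rightarrow> complex) \<Rightarrow> int" where
  "dep f = (\<Sum>w\<in>Supp f. \<bar>sl w\<bar>)"

definition Wset where "Wset \<mu> f = {c \<in> Supp \<mu>. word_le c (dep f)}"

definition act where "act C \<mu> f = (\<lambda>x. \<Sum>c\<in>Wset \<mu> f. \<mu> c * Act C c f x)"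

lemma Act_append: "Act C (b @ c) f = Act C b (Act C c f)"
  by (induction b) auto

lemma Act_zero[simp]: "Act C c (\<lambda>x. 0) = (\<lambda>x. 0)"
  by (induction c) auto

lemma finite_Supp_Act: "finite (Supp f) \<Longrightarrow> finite (Supp (Act C c f))"
  by (induction c) (auto intro: finite_Supp_Aop)

lemma Act_sum: "finite I \<Longrightarrow> (\<And>i. i \<in> I \<Longrightarrow> finite (Supp (h i))) \<Longrightarrow>
   Act C c (\<lambda>x. \<Sum>i\<in>I. k i * h i x) = (\<lambda>x. \<Sum>i\<in>I. k i * Act C c (h i) x)"
proof (induction c)
  case Nil then show ?case by simp
next
  case (Cons l c)
  then show ?case by (simp add: Aop_sum finite_Supp_Act)
qed

lemma Act_sl: "a \<in> Supp (Act C c f) \<Longrightarrow> \<exists>w\<in>Supp f. sl a = sl c + sl w"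
proof (induction c arbitrary: a)
  case Nil then show ?case by auto
next
  case (Cons l c)
  then obtain a' where "a' \<in> Supp (Act C c f)" "sl a = fst l + sl a'" using Aop_sl by fastforce
  then show ?case using Cons.IH by fastforce
qed

lemma lists_drop: "a \<in> lists A \<Longrightarrow> drop l a \<in> lists A"
  by (auto simp: in_lists_conv_set dest: in_set_dropD)

lemma M_minus_sl: "a \<in> M_minus S \<Longrightarrow> sl a \<le> 0"
  by (induction a) (auto simp: M_minus_Cons)

lemma M_minus_word_le: "a \<in> M_minus S \<Longrightarrow> word_le a 0"
proof -
  assume a: "a \<in> M_minus S"
  have "sl (drop l a) \<le> 0" for l
    using M_minus_sl[of "drop l a" S] a by (simp add: M_minus_def lists_drop)
  then show ?thesis by (simp add: word_le_sl)
qed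

lemma dep_ge: "finite (Supp f) \<Longrightarrow> w \<in> Supp f \<Longrightarrow> \<bar>sl w\<bar> \<le> dep f"
  unfolding dep_def by (rule member_le_sum) auto

lemma dep_nonneg: "0 \<le> dep f"
  unfolding dep_def by (rule sum_nonneg) auto

context LA begin

lemma Act_T: "f \<in> T \<Longrightarrow> c \<in> lists (UNIV \<times> S) \<Longrightarrow> Act C c f \<in> T"
proof (induction c)
  case Nil then show ?case by simp
next
  case (Cons l c)
  then show ?case by (cases l) (auto intro: A_T)
qed

lemma Act_J: "f \<in> J \<Longrightarrow> c \<in> lists (UNIV \<times> S) \<Longrightarrow> Act C c f \<in> J"
proof (induction c)
  case Nil then show ?case by simp
next
  case (Cons l c)
  then show ?case by (cases l) (auto intro: Pres)
qed

lemma Act_vanish: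
  assumes f: "f \<in> T" and c: "c \<in> lists (UNIV \<times> S)" and nz: "Act C c f \<noteq> (\<lambda>x. 0)"
  shows "word_le c (dep f)"
  unfolding word_le_sl
proof (intro allI impI)
  fix l assume "l < length c"
  have dc: "drop l c \<in> lists (UNIV \<times> S)" using c by (rule lists_drop)
  have "Act C c f = Act C (take l c) (Act C (drop l c) f)"
    using Act_append[of C "take l c" "drop l c" f] by simp
  then have "Act C (drop l c) f \<noteq> (\<lambda>x. 0)" using nz by auto
  then obtain a where a: "a \<in> Supp (Act C (drop l c) f)" by (auto simp: Supp_def)
  have "Act C (drop l c) f \<in> T" using Act_T[OF f dc] .
  then have "a \<in> M_minus S" using a by (auto simp: T_iff)
  then have "sl a \<le> 0" by (rule M_minus_sl)
  moreover obtain w where w: "w \<in> Supp f" "sl a = sl (drop l c) + sl w" using Act_sl[OF a] by blast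
  moreover have "\<bar>sl w\<bar> \<le> dep f" using dep_ge[OF T_finite[OF f] w(1)] .
  ultimately show "sl (drop l c) \<le> dep f" by linarith
qed

definition inF where "inF \<mu> \<longleftrightarrow> locfin \<mu> \<and> Supp \<mu> \<subseteq> lists (UNIV \<times> S)"

lemma finite_Wset: "locfin \<mu> \<Longrightarrow> finite (Wset \<mu> f)"
  by (simp add: locfin_def Wset_def)

lemma act_eq:
  assumes \<mu>: "inF \<mu>" and f: "f \<in> T" and W: "finite W"
    and cov: "\<And>c. \<mu> c \<noteq> 0 \<Longrightarrow> Act C c f \<noteq> (\<lambda>x. 0) \<Longrightarrow> c \<in> W"
  shows "act C \<mu> f = (\<lambda>x. \<Sum>c\<in>W. \<mu> c * Act C c f x)"
proof (rule ext)
  fix x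
  have fW: "finite (Wset \<mu> f)" using \<mu> by (simp add: inF_def finite_Wset)
  have z: "\<mu> c * Act C c f x = 0" if "c \<notin> Wset \<mu> f \<inter> W" for c
  proof (cases "\<mu> c = 0 \<or> Act C c f = (\<lambda>x. 0)")
    case True then show ?thesis by auto
  next
    case False
    then have "c \<in> W" using cov by blast
    moreover have "c \<in> Supp \<mu>" using False by (simp add: Supp_def)
    moreover have "word_le c (dep f)"
      using Act_vanish[OF f] False \<mu> \<open>c \<in> Supp \<mu>\<close> by (auto simp: inF_def)
    ultimately have "c \<in> Wset \<mu> f \<inter> W" by (simp add: Wset_def)
    with that show ?thesis by blast
  qed
  have "act C \<mu> f x = (\<Sum>c\<in>Wset \<mu> f. \<mu> c * Act C c f x)" by (simp add: act_def)
  also have "\<dots> = (\<Sum>c\<in>Wset \<mu> f \<inter> W. \<mu> c * Act C c f x)"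
    by (rule sum.mono_neutral_right) (use fW z in auto)
  also have "\<dots> = (\<Sum>c\<in>W. \<mu> c * Act C c f x)"
    by (rule sum.mono_neutral_left) (use W z in auto)
  finally show "act C \<mu> f x = (\<Sum>c\<in>W. \<mu> c * Act C c f x)" .
qed

lemma act_T: "inF \<mu> \<Longrightarrow> f \<in> T \<Longrightarrow> act C \<mu> f \<in> T"
  unfolding act_def
  by (rule T_sum) (auto simp: inF_def finite_Wset Wset_def locfin_def intro!: Act_T)

lemma act_J: "inF \<mu> \<Longrightarrow> f \<in> J \<Longrightarrow> act C \<mu> f \<in> J"
  unfolding act_def
  by (rule J_sum) (auto simp: inF_def finite_Wset Wset_def locfin_def intro!: Act_J)

lemma inF_add: "inF \<mu> \<Longrightarrow> inF \<nu> \<Longrightarrow> inF (\<lambda>a. \<mu> a + \<nu> a)"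
  unfolding inF_def using locfin_add Supp_add by blast

lemma inF_scal: "inF \<mu> \<Longrightarrow> inF (\<lambda>a. k * \<mu> a)"
  unfolding inF_def using locfin_scal Supp_scal by blast

lemma act_add:
  assumes \<mu>: "inF \<mu>" and \<nu>: "inF \<nu>" and f: "f \<in> T"
  shows "act C (\<lambda>a. \<mu> a + \<nu> a) f = (\<lambda>x. act C \<mu> f x + act C \<nu> f x)"
proof -
  let ?W = "Wset \<mu> f \<union> Wset \<nu> f"
  have W: "finite ?W" using \<mu> \<nu> by (simp add: inF_def finite_Wset)
  have cv: "c \<in> ?W" if "\<rho> c \<noteq> 0" "Act C c f \<noteq> (\<lambda>x. 0)" "\<rho> = \<mu> \<or> \<rho> = \<nu>" for \<rho> c
  proof -
    have "c \<in> Supp \<rho>" using that by (simp add: Supp_def)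
    moreover have "c \<in> lists (UNIV \<times> S)" using that \<open>c \<in> Supp \<rho>\<close> \<mu> \<nu> by (auto simp: inF_def)
    ultimately show ?thesis using Act_vanish[OF f _ that(2)] that(3) by (auto simp: Wset_def)
  qed
  have e1: "act C \<mu> f = (\<lambda>x. \<Sum>c\<in>?W. \<mu> c * Act C c f x)" using cv by (intro act_eq[OF \<mu> f W]) auto
  have e2: "act C \<nu> f = (\<lambda>x. \<Sum>c\<in>?W. \<nu> c * Act C c f x)" using cv by (intro act_eq[OF \<nu> f W]) auto
  have e3: "act C (\<lambda>a. \<mu> a + \<nu> a) f = (\<lambda>x. \<Sum>c\<in>?W. (\<mu> c + \<nu> c) * Act C c f x)"
  proof (rule act_eq[OF inF_add[OF \<mu> \<nu>] f W])
    fix c assume "\<mu> c + \<nu> c \<noteq> 0" "Act C c f \<noteq> (\<lambda>x. 0)"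
    then show "c \<in> ?W" using cv[of \<mu> c] cv[of \<nu> c] by (cases "\<mu> c = 0") auto
  qed
  show ?thesis unfolding e1 e2 e3 by (simp add: distrib_right sum.distrib)
qed

lemma act_scal:
  assumes \<mu>: "inF \<mu>" and f: "f \<in> T"
  shows "act C (\<lambda>a. k * \<mu> a) f = (\<lambda>x. k * act C \<mu> f x)"
proof -
  let ?W = "Wset \<mu> f"
  have W: "finite ?W" using \<mu> by (simp add: inF_def finite_Wset)
  have cv: "c \<in> ?W" if "\<mu> c \<noteq> 0" "Act C c f \<noteq> (\<lambda>x. 0)" for c
  proof -
    have "c \<in> Supp \<mu>" using that by (simp add: Supp_def)
    moreover have "c \<in> lists (UNIV \<times> S)" using \<open>c \<in> Supp \<mu>\<close> \<mu> by (auto simp: inF_def)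
    ultimately show ?thesis using Act_vanish[OF f _ that(2)] by (auto simp: Wset_def)
  qed
  have e3: "act C (\<lambda>a. k * \<mu> a) f = (\<lambda>x. \<Sum>c\<in>?W. (k * \<mu> c) * Act C c f x)"
    by (rule act_eq[OF inF_scal[OF \<mu>] f W]) (use cv in auto)
  have e4: "act C \<mu> f = (\<lambda>x. \<Sum>c\<in>?W. \<mu> c * Act C c f x)" by (simp add: act_def)
  show ?thesis by (simp only: e3 e4) (simp add: sum_distrib_left mult.assoc)
qed

lemma act_X:
  assumes "\<alpha> \<in> S" "f \<in> T"
  shows "act C (Xw \<alpha> m) f = A (m, \<alpha>) f"
proof -
  have i: "inF (Xw \<alpha> m)" using assms by (auto simp: inF_def Xw_ind intro: finite_Supp_locfin)
  have "act C (Xw \<alpha> m) f = (\<lambda>x. \<Sum>c\<in>{[(m,\<alpha>)]}. Xw \<alpha> m c * Act C c f x)"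
    by (rule act_eq[OF i assms(2)]) (auto simp: Xw_def split: if_splits)
  then show ?thesis by (simp add: Xw_def)
qed

end


context LA begin

lemma inF_conv: "inF \<nu> \<Longrightarrow> inF \<mu> \<Longrightarrow> inF (conv \<nu> \<mu>)"
proof -
  assume n: "inF \<nu>" and m: "inF \<mu>"
  have "locfin (conv \<nu> \<mu>)" using n m by (simp add: inF_def locfin_conv)
  moreover have "Supp (conv \<nu> \<mu>) \<subseteq> lists (UNIV \<times> S)"
  proof
    fix a assume "a \<in> Supp (conv \<nu> \<mu>)"
    then obtain b c where "a = b @ c" "b \<in> Supp \<nu>" "c \<in> Supp \<mu>" using Supp_conv by blast
    then show "a \<in> lists (UNIV \<times> S)" using n m by (auto simp: inF_def)
  qed
  ultimately show ?thesis by (simp add: inF_def)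
qed

lemma act_conv:
  assumes n: "inF \<nu>" and m: "inF \<mu>" and f: "f \<in> T"
  shows "act C (conv \<nu> \<mu>) f = act C \<nu> (act C \<mu> f)"
proof -
  define D where "D = dep f"
  define W\<mu> where "W\<mu> = Wset \<mu> f"
  define m0 where "m0 = (\<Sum>c\<in>W\<mu>. \<bar>sl c\<bar>)"
  define W\<nu> where "W\<nu> = {b \<in> Supp \<nu>. word_le b (D + m0)}"
  have fWm: "finite W\<mu>" using m by (simp add: W\<mu>_def inF_def finite_Wset)
  have fWn: "finite W\<nu>" using n by (simp add: W\<nu>_def inF_def locfin_def)
  have key: "b \<in> W\<nu> \<and> c \<in> W\<mu>" if b: "b \<in> Supp \<nu>" and c: "c \<in> Supp \<mu>" and nz: "Act C (b @ c) f \<noteq> (\<lambda>x. 0)" for b c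
  proof -
    have "b @ c \<in> lists (UNIV \<times> S)" using b c n m by (auto simp: inF_def)
    then have wl: "word_le (b @ c) D" using Act_vanish[OF f _ nz] by (simp add: D_def)
    then have cW: "c \<in> W\<mu>" using c word_le_append(1) by (auto simp: W\<mu>_def Wset_def D_def)
    have "\<bar>sl c\<bar> \<le> m0" unfolding m0_def using cW fWm by (intro member_le_sum) auto
    then have "D - sl c \<le> D + m0" by simp
    then have "word_le b (D + m0)" using word_le_append(2)[OF wl] word_le_mono by blast
    then show ?thesis using b cW by (simp add: W\<nu>_def)
  qed
  have fAct: "finite (Supp (Act C c f))" for c using T_finite[OF f] by (rule finite_Supp_Act)
  have em: "act C \<mu> f = (\<lambda>x. \<Sum>c\<in>W\<mu>. \<mu> c * Act C c f x)" by (simp add: act_def W\<mu>_def)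
  have Abm: "Act C b (act C \<mu> f) = (\<lambda>x. \<Sum>c\<in>W\<mu>. \<mu> c * Act C (b @ c) f x)" for b
    unfolding em using fWm fAct by (simp add: Act_sum Act_append)
  have e2: "act C \<nu> (act C \<mu> f) = (\<lambda>x. \<Sum>b\<in>W\<nu>. \<nu> b * Act C b (act C \<mu> f) x)"
  proof (rule act_eq[OF n act_T[OF m f] fWn])
    fix b assume nb: "\<nu> b \<noteq> 0" and nz: "Act C b (act C \<mu> f) \<noteq> (\<lambda>x. 0)"
    then obtain x where "(\<Sum>c\<in>W\<mu>. \<mu> c * Act C (b @ c) f x) \<noteq> 0" unfolding Abm by auto
    from sum.not_neutral_contains_not_neutral[OF this] obtain c where
      c: "c \<in> W\<mu>" "\<mu> c * Act C (b @ c) f x \<noteq> 0" by blast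
    then have "Act C (b @ c) f \<noteq> (\<lambda>x. 0)" by auto
    moreover have "c \<in> Supp \<mu>" using c by (simp add: W\<mu>_def Wset_def)
    moreover have "b \<in> Supp \<nu>" using nb by (simp add: Supp_def)
    ultimately show "b \<in> W\<nu>" using key by blast
  qed
  define W where "W = (\<lambda>(b,c). b @ c) ` (W\<nu> \<times> W\<mu>)"
  have fW: "finite W" using fWn fWm by (simp add: W_def)
  have e1: "act C (conv \<nu> \<mu>) f = (\<lambda>x. \<Sum>a\<in>W. conv \<nu> \<mu> a * Act C a f x)"
  proof (rule act_eq[OF inF_conv[OF n m] f fW])
    fix a assume "conv \<nu> \<mu> a \<noteq> 0" "Act C a f \<noteq> (\<lambda>x. 0)"
    then have "a \<in> Supp (conv \<nu> \<mu>)" by (simp add: Supp_def)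
    from Supp_conv[OF this] obtain b c where "a = b @ c" "b \<in> Supp \<nu>" "c \<in> Supp \<mu>" by blast
    then show "a \<in> W" using key \<open>Act C a f \<noteq> (\<lambda>x. 0)\<close> by (auto simp: W_def)
  qed
  show ?thesis
  proof (rule ext)
    fix x
    define G where "G = (\<lambda>(b,c). \<nu> b * \<mu> c * Act C (b @ c) f x)"
    define h where "h = (\<lambda>(a, k). (take k a, drop k (a::(int \<times> ('g \<Rightarrow> complex)) list)))"
    define P where "P = Sigma W (\<lambda>a. {..length a})"
    have fP: "finite P" using fW by (simp add: P_def)
    have "act C (conv \<nu> \<mu>) f x = (\<Sum>a\<in>W. \<Sum>k\<le>length a. G (take k a, drop k a))"
      unfolding e1 G_def conv_def by (simp add: sum_distrib_right)
    also have "\<dots> = (\<Sum>p\<in>P. G (h p))"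
      unfolding P_def h_def by (subst sum.Sigma) (auto simp: fW split_def)
    also have "\<dots> = (\<Sum>q\<in>h ` P. G q)"
    proof (rule sum.reindex[symmetric, unfolded comp_def])
      show "inj_on h P"
      proof (rule inj_onI)
        fix p q assume pq: "p \<in> P" "q \<in> P" "h p = h q"
        obtain a k a' k' where pp: "p = (a, k)" "q = (a', k')" by (cases p, cases q) auto
        have t: "take k a = take k' a'" and d: "drop k a = drop k' a'" using pq(3) pp by (auto simp: h_def)
        have "a = take k a @ drop k a" by simp
        also have "\<dots> = a'" by (simp only: t d append_take_drop_id)
        finally have aa: "a = a'" .
        have "k \<le> length a" "k' \<le> length a'" using pq pp by (auto simp: P_def)
        then have "k = k'" using arg_cong[OF t, of length] aa by simp
        then show "p = q" using aa pp by simp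
      qed
    qed
    also have "\<dots> = (\<Sum>q\<in>W\<nu> \<times> W\<mu>. G q)"
    proof (rule sum.mono_neutral_right)
      show "finite (h ` P)" using fP by simp
      show "W\<nu> \<times> W\<mu> \<subseteq> h ` P"
      proof
        fix q assume q: "q \<in> W\<nu> \<times> W\<mu>"
        then obtain b c where bc: "q = (b, c)" "b \<in> W\<nu>" "c \<in> W\<mu>" by auto
        then have "(b @ c, length b) \<in> P" by (auto simp: P_def W_def)
        moreover have "h (b @ c, length b) = q" using bc by (simp add: h_def)
        ultimately show "q \<in> h ` P" by (metis image_eqI)
      qed
      show "\<forall>q\<in>h ` P - W\<nu> \<times> W\<mu>. G q = 0"
      proof
        fix q assume q: "q \<in> h ` P - W\<nu> \<times> W\<mu>"
        obtain b c where bc: "q = (b, c)" by (cases q)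
        show "G q = 0"
        proof (rule ccontr)
          assume "G q \<noteq> 0"
          then have "\<nu> b \<noteq> 0" "\<mu> c \<noteq> 0" "Act C (b @ c) f x \<noteq> 0" using bc by (auto simp: G_def)
          moreover have "Act C (b @ c) f \<noteq> (\<lambda>x. 0)" using \<open>Act C (b @ c) f x \<noteq> 0\<close> by auto
          ultimately have "b \<in> W\<nu> \<and> c \<in> W\<mu>" using key by (simp add: Supp_def)
          then show False using q bc by auto
        qed
      qed
    qed
    also have "\<dots> = (\<Sum>b\<in>W\<nu>. \<nu> b * Act C b (act C \<mu> f) x)"
      unfolding Abm G_def by (simp add: sum.cartesian_product[symmetric] sum_distrib_left mult.assoc)
    also have "\<dots> = act C \<nu> (act C \<mu> f) x" using e2 by simp
    finally show "act C (conv \<nu> \<mu>) f x = act C \<nu> (act C \<mu> f) x" .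
  qed
qed

end


context LA begin

abbreviation "F \<equiv> F_carrier S"

lemma F_iff: "\<mu> \<in> F \<longleftrightarrow> inF \<mu>"
  by (auto simp: F_carrier_def inF_def locfin_def)

lemma F_ring_ring: "ring (F_ring S)"
  unfolding F_ring_def
proof (rule word_ring_ring)
  show "(\<lambda>a. 0) \<in> F" by (simp add: F_iff inF_def locfin_def)
  show "ind [] \<in> F" by (simp add: F_iff inF_def finite_Supp_locfin)
  fix f g assume f: "f \<in> F" and g: "g \<in> F"
  show "(\<lambda>a. f a + g a) \<in> F" using f g by (simp add: F_iff inF_add)
  show "conv f g \<in> F" using f g by (simp add: F_iff inF_conv)
next
  fix f assume f: "f \<in> F"
  show "(\<lambda>a. - f a) \<in> F" using inF_scal[of f "-1"] f by (simp add: F_iff)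
qed

definition Ks where "Ks = {\<mu> \<in> F. \<forall>f\<in>T. act C \<mu> f \<in> J}"

lemma act_zero: "act C (\<lambda>a. 0) f = (\<lambda>x. 0)"
  by (simp add: act_def Wset_def)

lemma Ks_ideal: "ideal Ks (F_ring S)"
  unfolding F_ring_def
proof (rule ideal_wordI[OF F_ring_ring[unfolded F_ring_def]])
  show "Ks \<subseteq> F" by (auto simp: Ks_def)
  show "(\<lambda>a. 0) \<in> Ks" by (simp add: Ks_def act_zero J_zero F_iff inF_def locfin_def)
  fix \<mu> assume m: "\<mu> \<in> Ks"
  then have mF: "inF \<mu>" and mJ: "\<And>f. f \<in> T \<Longrightarrow> act C \<mu> f \<in> J" by (auto simp: Ks_def F_iff)
  {
    fix \<nu> assume "\<nu> \<in> Ks"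
    then have nF: "inF \<nu>" and nJ: "\<And>f. f \<in> T \<Longrightarrow> act C \<nu> f \<in> J" by (auto simp: Ks_def F_iff)
    show "(\<lambda>a. \<mu> a + \<nu> a) \<in> Ks"
      using mF nF mJ nJ by (auto simp: Ks_def F_iff inF_add act_add intro!: J_add)
  }
  show "(\<lambda>a. - \<mu> a) \<in> Ks"
  proof -
    have i: "inF (\<lambda>a. - \<mu> a)" using inF_scal[OF mF, of "-1"] by simp
    have "act C (\<lambda>a. - \<mu> a) f = (\<lambda>x. - act C \<mu> f x)" if "f \<in> T" for f
      using act_scal[OF mF that, of "-1"] by simp
    then show ?thesis using i mJ by (auto simp: Ks_def F_iff intro!: J_neg)
  qed
  fix h assume "h \<in> F"
  then have hF: "inF h" by (simp add: F_iff)
  have "act C (conv h \<mu>) f \<in> J" if f: "f \<in> T" for f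
    using act_conv[OF hF mF f] act_J[OF hF mJ[OF f]] by simp
  then show "conv h \<mu> \<in> Ks" using inF_conv[OF hF mF] by (simp add: Ks_def F_iff)
  have "act C (conv \<mu> h) f \<in> J" if f: "f \<in> T" for f
    using act_conv[OF mF hF f] mJ[OF act_T[OF hF f]] by simp
  then show "conv \<mu> h \<in> Ks" using inF_conv[OF mF hF] by (simp add: Ks_def F_iff)
qed

lemma act_lin3:
  assumes P: "inF P" and Q: "inF Q" and R: "inF R" and f: "f \<in> T"
  shows "act C (\<lambda>a. P a - Q a - c * R a) f = (\<lambda>x. act C P f x - act C Q f x - c * act C R f x)"
proof -
  have i1: "inF (\<lambda>a. P a + (-1) * Q a)" by (rule inF_add[OF P inF_scal[OF Q]])
  have i2: "inF (\<lambda>a. (-c) * R a)" by (rule inF_scal[OF R])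
  have e: "(\<lambda>a. P a - Q a - c * R a) = (\<lambda>a. (P a + (-1) * Q a) + (-c) * R a)" by (rule ext) simp
  have a1: "act C (\<lambda>a. (P a + (-1) * Q a) + (-c) * R a) f
      = (\<lambda>x. act C (\<lambda>a. P a + (-1) * Q a) f x + act C (\<lambda>a. (-c) * R a) f x)"
    by (rule act_add[OF i1 i2 f])
  have a2: "act C (\<lambda>a. P a + (-1) * Q a) f = (\<lambda>x. act C P f x + act C (\<lambda>a. (-1) * Q a) f x)"
    by (rule act_add[OF P inF_scal[OF Q] f])
  have a3: "act C (\<lambda>a. (-1) * Q a) f = (\<lambda>x. (-1) * act C Q f x)" by (rule act_scal[OF Q f])
  have a4: "act C (\<lambda>a. (-c) * R a) f = (\<lambda>x. (-c) * act C R f x)" by (rule act_scal[OF R f])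
  show ?thesis unfolding e a1 a2 a3 a4 by (rule ext) simp
qed

lemma rel_F_act:
  assumes s: "\<alpha> \<in> S" "\<beta> \<in> S" and f: "f \<in> T"
  shows "inF (rel C \<alpha> \<beta> m l) \<and> act C (rel C \<alpha> \<beta> m l) f = Com (m,\<alpha>) (l,\<beta>) f"
proof -
  define R where "R = (if C \<alpha> \<beta> = 0 then (\<lambda>a. 0) else Xw (radd \<alpha> \<beta>) (m + l))"
  have XF: "inF (Xw \<gamma> k)" if "\<gamma> \<in> S" for \<gamma> k
    using that by (auto simp: inF_def Xw_ind intro: finite_Supp_locfin)
  have RF: "inF R"
    using XF H1 s by (auto simp: R_def inF_def locfin_def)
  have RA: "act C R f = (\<lambda>x. (if C \<alpha> \<beta> = 0 then 0 else A (m + l, radd \<alpha> \<beta>) f x))"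
    using act_X[of "radd \<alpha> \<beta>" f "m+l"] H1 s f by (auto simp: R_def act_zero)
  have P: "inF (conv (Xw \<alpha> m) (Xw \<beta> l))" and Q: "inF (conv (Xw \<beta> l) (Xw \<alpha> m))"
    using XF s by (auto intro: inF_conv)
  have e: "rel C \<alpha> \<beta> m l = (\<lambda>a. conv (Xw \<alpha> m) (Xw \<beta> l) a - conv (Xw \<beta> l) (Xw \<alpha> m) a
       - C \<alpha> \<beta> * R a)"
    by (auto simp: rel_def R_def)
  have "inF (rel C \<alpha> \<beta> m l)" unfolding e using inF_add[OF inF_add[OF P inF_scal[OF Q, of "-1"]] inF_scal[OF RF, of "- C \<alpha> \<beta>"]]
    by simp
  moreover have "act C (rel C \<alpha> \<beta> m l) f = Com (m,\<alpha>) (l,\<beta>) f"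
  proof -
    have aT2: "A (l,\<beta>) f \<in> T" by (rule A_T[OF f]) (simp add: s)
    have aT1: "A (m,\<alpha>) f \<in> T" by (rule A_T[OF f]) (simp add: s)
    have c1: "act C (conv (Xw \<alpha> m) (Xw \<beta> l)) f = A (m,\<alpha>) (A (l,\<beta>) f)"
      using act_conv[OF XF[OF s(1)] XF[OF s(2)] f] act_X[OF s(2) f] act_X[OF s(1) aT2] by simp
    have c2: "act C (conv (Xw \<beta> l) (Xw \<alpha> m)) f = A (l,\<beta>) (A (m,\<alpha>) f)"
      using act_conv[OF XF[OF s(2)] XF[OF s(1)] f] act_X[OF s(1) f] act_X[OF s(2) aT1] by simp
    show ?thesis unfolding e act_lin3[OF P Q RF f] c1 c2 RA Com_def
      by (rule ext) (simp add: cf_def lbr_def)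
  qed
  ultimately show ?thesis by simp
qed

definition gensI where "gensI = {rel C \<alpha> \<beta> m l | \<alpha> \<beta> m l. \<alpha> \<in> S \<and> \<beta> \<in> S}"

lemma I_def': "I_tilde S C = genideal (F_ring S) gensI"
  by (simp add: I_tilde_def gensI_def)

lemma gensI_F: "gensI \<subseteq> F"
  using rel_F_act[OF _ _ T_zero] by (auto simp: gensI_def F_iff)

lemma I_ideal: "ideal (I_tilde S C) (F_ring S)"
proof -
  interpret R: ring "F_ring S" by (rule F_ring_ring)
  show ?thesis unfolding I_def' by (rule R.genideal_ideal) (use gensI_F in \<open>simp add: F_ring_def word_ring_def\<close>)
qed

lemma I_Ks: "I_tilde S C \<subseteq> Ks"
proof -
  interpret R: ring "F_ring S" by (rule F_ring_ring)
  show ?thesis unfolding I_def'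
  proof (rule R.genideal_minimal[OF Ks_ideal])
    show "gensI \<subseteq> Ks"
    proof
      fix g assume "g \<in> gensI"
      then obtain \<alpha> \<beta> m l where g: "g = rel C \<alpha> \<beta> m l" "\<alpha> \<in> S" "\<beta> \<in> S" by (auto simp: gensI_def)
      have "g \<in> F" using rel_F_act[OF g(2,3) T_zero] g by (simp add: F_iff)
      moreover have "act C g f \<in> J" if "f \<in> T" for f
        using rel_F_act[OF g(2,3) that] g Comm[OF that] by simp
      ultimately show "g \<in> Ks" by (simp add: Ks_def)
    qed
  qed
qed

lemma J_I: "J \<subseteq> I_tilde S C"
proof -
have "J \<subseteq> I_tilde S C \<inter> T"
proof (rule J_minimal)
  interpret II: ideal "I_tilde S C" "F_ring S" by (rule I_ideal)
  show "gensJ \<subseteq> I_tilde S C \<inter> T"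
  proof -
    have "gensI \<subseteq> I_tilde S C" unfolding I_def' by (rule ring.genideal_self[OF F_ring_ring]) (use gensI_F in \<open>simp add: F_ring_def word_ring_def\<close>)
    moreover have "gensJ \<subseteq> gensI" unfolding gensJ_def gensI_def by blast
    ultimately show ?thesis using gensJ_T by blast
  qed
  show "ideal (I_tilde S C \<inter> T) (word_ring T)"
  proof (rule ideal_wordI[OF T_ring])
    have MM: "M_minus S \<subseteq> lists (UNIV \<times> S)" unfolding M_minus_def by (rule lists_mono) auto
    have TF: "T \<subseteq> F"
    proof
      fix x assume x: "x \<in> T"
      have "Supp x \<subseteq> M_minus S" using x by (simp add: T_iff)
      then have "Supp x \<subseteq> lists (UNIV \<times> S)" using MM by (rule order_trans)
      then show "x \<in> F" using finite_Supp_locfin[OF T_finite[OF x]] by (simp add: F_iff inF_def)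
    qed
    have Isub: "I_tilde S C \<subseteq> F" using additive_subgroup.a_subset[OF ideal.axioms(1)[OF I_ideal]] by (simp add: F_ring_def word_ring_def)
    have FR: "ring (word_ring F)" using F_ring_ring by (simp add: F_ring_def)
    show "I_tilde S C \<inter> T \<subseteq> T" by simp
    have "\<zero>\<^bsub>F_ring S\<^esub> \<in> I_tilde S C" by (rule additive_subgroup.zero_closed[OF ideal.axioms(1)[OF I_ideal]])
    then show "(\<lambda>a. 0) \<in> I_tilde S C \<inter> T" using T_zero by (simp add: F_ring_def word_ring_def)
    fix f assume f: "f \<in> I_tilde S C \<inter> T"
    {
      fix g assume g: "g \<in> I_tilde S C \<inter> T"
      show "(\<lambda>a. f a + g a) \<in> I_tilde S C \<inter> T"
        using additive_subgroup.a_closed[OF ideal.axioms(1)[OF I_ideal], of f g] f g T_add by (simp add: F_ring_def word_ring_def)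
    }
    show "(\<lambda>a. - f a) \<in> I_tilde S C \<inter> T"
      using additive_subgroup.a_inv_closed[OF ideal.axioms(1)[OF I_ideal], of f] f word_ring_minus[OF FR, of f] Isub T_neg by (auto simp: F_ring_def)
    fix h assume h: "h \<in> T"
    show "conv h f \<in> I_tilde S C \<inter> T" using ideal.I_l_closed[OF I_ideal, of f h] f h TF T_conv
      by (auto simp: F_ring_def word_ring_def)
    show "conv f h \<in> I_tilde S C \<inter> T" using ideal.I_r_closed[OF I_ideal, of f h] f h TF T_conv
      by (auto simp: F_ring_def word_ring_def)
  qed
qed
then show ?thesis by blast
qed

lemma Act_ind_minus: "c \<in> M_minus S \<Longrightarrow> Act C c (ind []) = ind c"
proof (induction c)
  case Nil then show ?case by simp
next
  case (Cons l c)
  then have "fst l \<le> -1" "c \<in> M_minus S" by (auto simp: M_minus_Cons)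
  then show ?case using Cons by (simp add: Aop_minus lmul_ind)
qed

lemma inj_key: "\<mu> \<in> I_tilde S C \<Longrightarrow> \<mu> \<in> T \<Longrightarrow> \<mu> \<in> J"
proof -
  assume mI: "\<mu> \<in> I_tilde S C" and mT: "\<mu> \<in> T"
  have mK: "\<mu> \<in> Ks" using mI I_Ks by blast
  then have "act C \<mu> (ind []) \<in> J" using T_ind[of "[]"] by (simp add: Ks_def)
  moreover have "act C \<mu> (ind []) = \<mu>"
  proof -
    have d: "dep (ind []) = 0" by (simp add: dep_def)
    have W: "Wset \<mu> (ind []) = Supp \<mu>"
      using mT M_minus_word_le by (auto simp: Wset_def d T_iff)
    have ac: "\<And>c. c \<in> Supp \<mu> \<Longrightarrow> Act C c (ind []) = ind c" using mT Act_ind_minus by (auto simp: T_iff)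
    have "act C \<mu> (ind []) = (\<lambda>x. \<Sum>c\<in>Supp \<mu>. \<mu> c * ind c x)"
      unfolding act_def W by (rule ext, rule sum.cong) (simp_all add: ac)
    also have "\<dots> = \<mu>" using fun_expand[OF T_finite[OF mT]] by simp
    finally show ?thesis .
  qed
  ultimately show ?thesis by simp
qed

end


lemma coset_mem:
  "y \<in> K +>\<^bsub>word_ring A\<^esub> x \<longleftrightarrow> (\<exists>h\<in>K. y = (\<lambda>a. h a + x a))"
  by (auto simp: a_r_coset_def' word_ring_def)

lemma coset_eq:
  assumes R: "ring (word_ring A)" and K: "ideal K (word_ring A)" and x: "x \<in> A" and y: "y \<in> A"
  shows "K +>\<^bsub>word_ring A\<^esub> x = K +>\<^bsub>word_ring A\<^esub> y \<longleftrightarrow> (\<lambda>a. x a - y a) \<in> K"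
proof -
  interpret K: ideal K "word_ring A" by (rule K)
  have Ksub: "K \<subseteq> A" using additive_subgroup.a_subset[OF ideal.axioms(1)[OF K]] by (simp add: word_ring_def)
  have neg: "(\<lambda>a. - h a) \<in> K" if "h \<in> K" for h
  proof -
    have "\<ominus>\<^bsub>word_ring A\<^esub> h \<in> K" using additive_subgroup.a_inv_closed[OF ideal.axioms(1)[OF K] that] .
    moreover have "h \<in> A" using that Ksub by blast
    ultimately show ?thesis using word_ring_minus[OF R, of h] by simp
  qed
  show ?thesis
  proof
    assume e: "K +>\<^bsub>word_ring A\<^esub> x = K +>\<^bsub>word_ring A\<^esub> y"
    have "x \<in> K +>\<^bsub>word_ring A\<^esub> x" using K.a_rcos_self x by (simp add: word_ring_def)
    then have "x \<in> K +>\<^bsub>word_ring A\<^esub> y" using e by simp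
    then obtain h where h: "h \<in> K" "x = (\<lambda>a. h a + y a)" by (auto simp: coset_mem)
    then have "(\<lambda>a. x a - y a) = h" by auto
    then show "(\<lambda>a. x a - y a) \<in> K" using h by simp
  next
    assume d: "(\<lambda>a. x a - y a) \<in> K"
    have hK: "(\<lambda>a. y a - x a) \<in> K" using neg[OF d] by simp
    have "y \<in> K +>\<^bsub>word_ring A\<^esub> x" unfolding coset_mem
      by (rule bexI[of _ "\<lambda>a. y a - x a"]) (use hK in auto)
    then show "K +>\<^bsub>word_ring A\<^esub> x = K +>\<^bsub>word_ring A\<^esub> y"
      using K.a_repr_independence' x by (simp add: word_ring_def)
  qed
qed

lemma carrier_quot:
  "X \<in> carrier (word_ring A Quot K) \<longleftrightarrow> (\<exists>x\<in>A. X = K +>\<^bsub>word_ring A\<^esub> x)"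
  by (auto simp: FactRing_def A_RCOSETS_def' word_ring_def)

context LA begin

lemma T_sub_F: "T \<subseteq> F"
proof
  have MM: "M_minus S \<subseteq> lists (UNIV \<times> S)" unfolding M_minus_def by (rule lists_mono) auto
  fix x assume x: "x \<in> T"
  have "Supp x \<subseteq> M_minus S" using x by (simp add: T_iff)
  then have "Supp x \<subseteq> lists (UNIV \<times> S)" using MM by (rule order_trans)
  then show "x \<in> F" using finite_Supp_locfin[OF T_finite[OF x]] by (simp add: F_iff inF_def)
qed

lemma F_minus_T: "\<mu> \<in> F \<Longrightarrow> Supp \<mu> \<subseteq> M_minus S \<Longrightarrow> \<mu> \<in> T"
proof -
  assume m: "\<mu> \<in> F" and s: "Supp \<mu> \<subseteq> M_minus S"
  have "Supp \<mu> = {a \<in> Supp \<mu>. word_le a 0}" using s M_minus_word_le by blast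
  moreover have "finite {a \<in> Supp \<mu>. word_le a 0}" using m by (simp add: F_iff inF_def locfin_def)
  ultimately show ?thesis using s by (simp add: T_iff)
qed

definition phi where
  "phi X = I_tilde S C +>\<^bsub>F_ring S\<^esub> (SOME \<mu>. \<mu> \<in> T \<and> X = J +>\<^bsub>word_ring T\<^esub> \<mu>)"

lemma FR: "ring (word_ring F)" using F_ring_ring by (simp add: F_ring_def)
lemma IF: "ideal (I_tilde S C) (word_ring F)" using I_ideal by (simp add: F_ring_def)

lemma phi_eq: "\<mu> \<in> T \<Longrightarrow> phi (J +>\<^bsub>word_ring T\<^esub> \<mu>) = I_tilde S C +>\<^bsub>F_ring S\<^esub> \<mu>"
proof -
  assume m: "\<mu> \<in> T"
  define \<nu> where "\<nu> = (SOME \<nu>. \<nu> \<in> T \<and> J +>\<^bsub>word_ring T\<^esub> \<mu> = J +>\<^bsub>word_ring T\<^esub> \<nu>)"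
  have "\<nu> \<in> T \<and> J +>\<^bsub>word_ring T\<^esub> \<mu> = J +>\<^bsub>word_ring T\<^esub> \<nu>"
    unfolding \<nu>_def by (rule someI[of _ \<mu>]) (simp add: m)
  then have n: "\<nu> \<in> T" and e: "J +>\<^bsub>word_ring T\<^esub> \<mu> = J +>\<^bsub>word_ring T\<^esub> \<nu>" by auto
  have "(\<lambda>a. \<mu> a - \<nu> a) \<in> J" using e coset_eq[OF T_ring J_ideal m n] by simp
  then have d: "(\<lambda>a. \<nu> a - \<mu> a) \<in> I_tilde S C"
    using J_I J_neg[of "\<lambda>a. \<mu> a - \<nu> a"] by auto
  have "I_tilde S C +>\<^bsub>word_ring F\<^esub> \<nu> = I_tilde S C +>\<^bsub>word_ring F\<^esub> \<mu>"
    using coset_eq[OF FR IF] d n m T_sub_F by auto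
  then show ?thesis unfolding phi_def \<nu>_def[symmetric] by (simp add: F_ring_def)
qed

lemma main_iso:
  "\<exists>\<phi>. \<phi> \<in> ring_iso (U_minus S C) (U_tilde_minus S C)
      \<and> (\<forall>c. \<phi> (J +>\<^bsub>word_ring T\<^esub> constw c) = I_tilde S C +>\<^bsub>F_ring S\<^esub> constw c)"
proof (intro exI conjI allI)
  interpret JI: ideal J "word_ring T" by (rule J_ideal)
  interpret II: ideal "I_tilde S C" "word_ring F" by (rule IF)
  have cU: "X \<in> carrier (U_minus S C) \<longleftrightarrow> (\<exists>x\<in>T. X = J +>\<^bsub>word_ring T\<^esub> x)" for X
    by (simp add: U_minus_def carrier_quot)
  have cUt: "carrier (U_tilde_minus S C) = {I_tilde S C +>\<^bsub>word_ring F\<^esub> \<mu> | \<mu>. \<mu> \<in> F \<and> Supp \<mu> \<subseteq> M_minus S}"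
    by (simp add: U_tilde_minus_def F_ring_def)
  have mUt: "x \<otimes>\<^bsub>U_tilde_minus S C\<^esub> y = rcoset_mult (word_ring F) (I_tilde S C) x y" for x y
    by (simp add: U_tilde_minus_def U_tilde_def F_ring_def FactRing_def)
  have aUt: "x \<oplus>\<^bsub>U_tilde_minus S C\<^esub> y = x <+>\<^bsub>word_ring F\<^esub> y" for x y
    by (simp add: U_tilde_minus_def U_tilde_def F_ring_def FactRing_def)
  have oUt: "\<one>\<^bsub>U_tilde_minus S C\<^esub> = I_tilde S C +>\<^bsub>word_ring F\<^esub> ind []"
    by (simp add: U_tilde_minus_def U_tilde_def F_ring_def FactRing_def word_ring_def ind_def)
  have mU: "x \<otimes>\<^bsub>U_minus S C\<^esub> y = rcoset_mult (word_ring T) J x y" for x y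
    by (simp add: U_minus_def FactRing_def)
  have aU: "x \<oplus>\<^bsub>U_minus S C\<^esub> y = x <+>\<^bsub>word_ring T\<^esub> y" for x y
    by (simp add: U_minus_def FactRing_def)
  have oU: "\<one>\<^bsub>U_minus S C\<^esub> = J +>\<^bsub>word_ring T\<^esub> ind []"
    by (simp add: U_minus_def FactRing_def word_ring_def ind_def)
  have pe: "phi (J +>\<^bsub>word_ring T\<^esub> \<mu>) = I_tilde S C +>\<^bsub>word_ring F\<^esub> \<mu>" if "\<mu> \<in> T" for \<mu>
    using phi_eq[OF that] by (simp add: F_ring_def)
  have TM: "\<mu> \<in> T \<Longrightarrow> \<mu> \<in> F \<and> Supp \<mu> \<subseteq> M_minus S" for \<mu> using T_sub_F by (auto simp: T_iff)
  show "phi \<in> ring_iso (U_minus S C) (U_tilde_minus S C)"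
    unfolding ring_iso_def
  proof (intro CollectI conjI)
    show "phi \<in> ring_hom (U_minus S C) (U_tilde_minus S C)"
    proof (rule ring_hom_memI)
      fix X assume "X \<in> carrier (U_minus S C)"
      then obtain x where x: "x \<in> T" "X = J +>\<^bsub>word_ring T\<^esub> x" unfolding cU by blast
      have "phi X = I_tilde S C +>\<^bsub>word_ring F\<^esub> x" using pe[OF x(1)] x(2) by simp
      then show "phi X \<in> carrier (U_tilde_minus S C)" unfolding cUt using TM[OF x(1)] by blast
      fix Y assume "Y \<in> carrier (U_minus S C)"
      then obtain y where y: "y \<in> T" "Y = J +>\<^bsub>word_ring T\<^esub> y" unfolding cU by blast
      have xy: "x \<in> carrier (word_ring T)" "y \<in> carrier (word_ring T)" using x y by (simp_all add: word_ring_def)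
      have xyF: "x \<in> carrier (word_ring F)" "y \<in> carrier (word_ring F)" using x y T_sub_F by (auto simp: word_ring_def)
      show "phi (X \<otimes>\<^bsub>U_minus S C\<^esub> Y) = phi X \<otimes>\<^bsub>U_tilde_minus S C\<^esub> phi Y"
      proof -
        have "X \<otimes>\<^bsub>U_minus S C\<^esub> Y = J +>\<^bsub>word_ring T\<^esub> conv x y"
          unfolding mU x(2) y(2) using JI.rcoset_mult_add[OF xy] by (simp add: word_ring_def)
        then have "phi (X \<otimes>\<^bsub>U_minus S C\<^esub> Y) = I_tilde S C +>\<^bsub>word_ring F\<^esub> conv x y"
          using pe T_conv x y by simp
        also have "\<dots> = phi X \<otimes>\<^bsub>U_tilde_minus S C\<^esub> phi Y"
          unfolding mUt x(2) y(2) pe[OF x(1)] pe[OF y(1)] using II.rcoset_mult_add[OF xyF] by (simp add: word_ring_def)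
        finally show ?thesis .
      qed
      show "phi (X \<oplus>\<^bsub>U_minus S C\<^esub> Y) = phi X \<oplus>\<^bsub>U_tilde_minus S C\<^esub> phi Y"
      proof -
        have "X \<oplus>\<^bsub>U_minus S C\<^esub> Y = J +>\<^bsub>word_ring T\<^esub> (\<lambda>a. x a + y a)"
          unfolding aU x(2) y(2) using JI.a_rcos_sum[OF xy] by (simp add: word_ring_def)
        then have "phi (X \<oplus>\<^bsub>U_minus S C\<^esub> Y) = I_tilde S C +>\<^bsub>word_ring F\<^esub> (\<lambda>a. x a + y a)"
          using pe T_add x y by simp
        also have "\<dots> = phi X \<oplus>\<^bsub>U_tilde_minus S C\<^esub> phi Y"
          unfolding aUt x(2) y(2) pe[OF x(1)] pe[OF y(1)] using II.a_rcos_sum[OF xyF] by (simp add: word_ring_def)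
        finally show ?thesis .
      qed
    next
      show "phi \<one>\<^bsub>U_minus S C\<^esub> = \<one>\<^bsub>U_tilde_minus S C\<^esub>"
        unfolding oU oUt using pe T_ind[of "[]"] by simp
    qed
    show "bij_betw phi (carrier (U_minus S C)) (carrier (U_tilde_minus S C))"
      unfolding bij_betw_def
    proof
      show "inj_on phi (carrier (U_minus S C))"
      proof (rule inj_onI)
        fix X Y assume X: "X \<in> carrier (U_minus S C)" and Y: "Y \<in> carrier (U_minus S C)" and e: "phi X = phi Y"
        obtain x where x: "x \<in> T" "X = J +>\<^bsub>word_ring T\<^esub> x" using X unfolding cU by blast
        obtain y where y: "y \<in> T" "Y = J +>\<^bsub>word_ring T\<^esub> y" using Y unfolding cU by blast
        have "I_tilde S C +>\<^bsub>word_ring F\<^esub> x = I_tilde S C +>\<^bsub>word_ring F\<^esub> y"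
          using e x(2) y(2) pe[OF x(1)] pe[OF y(1)] by simp
        moreover have "x \<in> F" "y \<in> F" using x(1) y(1) T_sub_F by auto
        ultimately have d: "(\<lambda>a. x a - y a) \<in> I_tilde S C" using coset_eq[OF FR IF] by simp
        have "(\<lambda>a. x a - y a) \<in> T" using T_add[OF x(1) T_neg[OF y(1)]] by simp
        then have "(\<lambda>a. x a - y a) \<in> J" using inj_key d by simp
        then show "X = Y" using x(2) y(2) coset_eq[OF T_ring J_ideal x(1) y(1)] by simp
      qed
      show "phi ` carrier (U_minus S C) = carrier (U_tilde_minus S C)"
      proof
        show "phi ` carrier (U_minus S C) \<subseteq> carrier (U_tilde_minus S C)"
        proof
          fix Z assume "Z \<in> phi ` carrier (U_minus S C)"
          then obtain X where X: "X \<in> carrier (U_minus S C)" "Z = phi X" by blast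
          then obtain x where x: "x \<in> T" "X = J +>\<^bsub>word_ring T\<^esub> x" unfolding cU by blast
          have "Z = I_tilde S C +>\<^bsub>word_ring F\<^esub> x" using pe[OF x(1)] x(2) X(2) by simp
          then show "Z \<in> carrier (U_tilde_minus S C)" unfolding cUt using TM[OF x(1)] by blast
        qed
        show "carrier (U_tilde_minus S C) \<subseteq> phi ` carrier (U_minus S C)"
        proof
          fix Z assume "Z \<in> carrier (U_tilde_minus S C)"
          then obtain \<mu> where m: "\<mu> \<in> F" "Supp \<mu> \<subseteq> M_minus S" "Z = I_tilde S C +>\<^bsub>word_ring F\<^esub> \<mu>"
            unfolding cUt by blast
          then have mT: "\<mu> \<in> T" using F_minus_T by simp
          then have "J +>\<^bsub>word_ring T\<^esub> \<mu> \<in> carrier (U_minus S C)" unfolding cU by blast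
          moreover have "Z = phi (J +>\<^bsub>word_ring T\<^esub> \<mu>)" using pe[OF mT] m by simp
          ultimately show "Z \<in> phi ` carrier (U_minus S C)" by blast
        qed
      qed
    qed
  qed
  fix c
  show "phi (J +>\<^bsub>word_ring T\<^esub> constw c) = I_tilde S C +>\<^bsub>F_ring S\<^esub> constw c"
    using phi_eq[OF constw_T] .
qed

end


lemma lie_facts:
  fixes sc :: "complex \<Rightarrow> 'g::ab_group_add \<Rightarrow> 'g" and br
  assumes L: "lie_algebra sc br"
  shows "\<And>c u v. br (sc c u) v = sc c (br u v)"
    and "\<And>c u v. br u (sc c v) = sc c (br u v)"
    and "\<And>u v. br u v = - br v u"
    and "\<And>x y z. br (br x y) z = br (br x z) y + br x (br y z)"
    and "\<And>v. br 0 v = 0"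
proof -
  interpret V: vector_space sc using L by (simp add: lie_algebra_def)
  have L1: "\<And>x y z a b. br (sc a x + sc b y) z = sc a (br x z) + sc b (br y z)"
    and L2: "\<And>x y z a b. br z (sc a x + sc b y) = sc a (br z x) + sc b (br z y)"
    and L3: "\<And>x. br x x = 0"
    and L4: "\<And>x y z. br x (br y z) + br y (br z x) + br z (br x y) = 0"
    using L by (auto simp: lie_algebra_def)
  show sl: "\<And>c u v. br (sc c u) v = sc c (br u v)"
    using L1[where b=0] by simp
  show sr: "\<And>c u v. br u (sc c v) = sc c (br u v)"
    using L2[where b=0] by simp
  have addl: "\<And>u v w. br (u + v) w = br u w + br v w"
    using L1[where a=1 and b=1] by simp
  have addr: "\<And>u v w. br w (u + v) = br w u + br w v"
    using L2[where a=1 and b=1] by simp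
  show anti: "\<And>u v. br u v = - br v u"
  proof -
    fix u v
    have "0 = br (u + v) (u + v)" using L3 by simp
    also have "\<dots> = br u u + br u v + (br v u + br v v)" by (simp add: addl addr)
    finally have "br u v + br v u = 0" using L3 by (simp add: add.assoc)
    then show "br u v = - br v u" by (simp add: eq_neg_iff_add_eq_0)
  qed
  have negl: "\<And>u v. br (- u) v = - br u v"
  proof -
    fix u v
    have "br (sc (-1) u) v = sc (-1) (br u v)" by (rule sl)
    then show "br (- u) v = - br u v" by (simp add: V.scale_minus_left)
  qed
  show "\<And>v. br 0 v = 0" using sl[of 0] by simp
  show "\<And>x y z. br (br x y) z = br (br x z) y + br x (br y z)"
  proof -
    fix x y z
    have "br z (br x y) = - br (br x y) z" by (rule anti)
    moreover have "br y (br z x) = br (br x z) y"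
    proof -
      have e1: "br z x = - br x z" by (rule anti)
      have "br y (br z x) = - br (br z x) y" by (rule anti)
      also have "\<dots> = - br (- br x z) y" by (simp only: e1)
      also have "\<dots> = br (br x z) y" by (simp add: negl)
      finally show ?thesis .
    qed
    ultimately have "br x (br y z) + br (br x z) y + - br (br x y) z = 0" using L4[of x y z] by simp
    then show "br (br x y) z = br (br x z) y + br x (br y z)"
      by (simp add: algebra_simps eq_neg_iff_add_eq_0 add_eq_0_iff)
  qed
qed

lemma radd_pos:
  assumes "\<alpha> \<in> pos_roots sc br H Bs" "\<beta> \<in> pos_roots sc br H Bs" "radd \<alpha> \<beta> \<in> roots sc br H"
  shows "radd \<alpha> \<beta> \<in> pos_roots sc br H Bs"
proof -
  obtain k1 where k1: "\<alpha> = (\<lambda>x. \<Sum>\<pi>\<in>Bs. of_nat (k1 \<pi>) * \<pi> x)" using assms(1) by (auto simp: pos_roots_def)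
  obtain k2 where k2: "\<beta> = (\<lambda>x. \<Sum>\<pi>\<in>Bs. of_nat (k2 \<pi>) * \<pi> x)" using assms(2) by (auto simp: pos_roots_def)
  have "radd \<alpha> \<beta> = (\<lambda>x. \<Sum>\<pi>\<in>Bs. of_nat ((\<lambda>\<pi>. k1 \<pi> + k2 \<pi>) \<pi>) * \<pi> x)"
    unfolding radd_def k1 k2 by (simp add: distrib_right sum.distrib)
  then show ?thesis using assms(3) unfolding pos_roots_def
    by (intro CollectI conjI exI[of _ "\<lambda>\<pi>. k1 \<pi> + k2 \<pi>"]) simp_all
qed

lemma LA_from_lie:
  fixes sc :: "complex \<Rightarrow> 'g::ab_group_add \<Rightarrow> 'g"
  assumes L: "lie_algebra sc br"
    and rootvec: "\<forall>\<alpha>\<in>roots sc br H. x \<alpha> \<in> root_space sc br H \<alpha> \<and> x \<alpha> \<noteq> 0"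
    and structconst: "\<forall>\<alpha>\<in>pos_roots sc br H Bs. \<forall>\<beta>\<in>pos_roots sc br H Bs.
           br (x \<alpha>) (x \<beta>) = sc (C \<alpha> \<beta>) (x (radd \<alpha> \<beta>))
           \<and> (radd \<alpha> \<beta> \<notin> roots sc br H \<longrightarrow> C \<alpha> \<beta> = 0)"
    and S_pos: "S \<subseteq> pos_roots sc br H Bs"
    and S_closed: "\<forall>\<alpha>\<in>S. \<forall>\<beta>\<in>S. radd \<alpha> \<beta> \<in> pos_roots sc br H Bs \<longrightarrow> radd \<alpha> \<beta> \<in> S"
  shows "LA S C"
proof -
  interpret V: vector_space sc using L by (simp add: lie_algebra_def)
  note lf = lie_facts[OF L]
  let ?P = "pos_roots sc br H Bs"
  have pr: "\<alpha> \<in> ?P \<Longrightarrow> \<alpha> \<in> roots sc br H" for \<alpha> by (simp add: pos_roots_def)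
  have sc_c: "br (x \<alpha>) (x \<beta>) = sc (C \<alpha> \<beta>) (x (radd \<alpha> \<beta>))" if "\<alpha> \<in> ?P" "\<beta> \<in> ?P" for \<alpha> \<beta>
    using structconst that by blast
  have sc_z: "radd \<alpha> \<beta> \<notin> roots sc br H \<Longrightarrow> C \<alpha> \<beta> = 0" if "\<alpha> \<in> ?P" "\<beta> \<in> ?P" for \<alpha> \<beta>
    using structconst that by blast
  have nz: "\<alpha> \<in> roots sc br H \<Longrightarrow> x \<alpha> \<noteq> 0" for \<alpha> using rootvec by blast
  have cpos: "C \<alpha> \<beta> \<noteq> 0 \<Longrightarrow> radd \<alpha> \<beta> \<in> ?P" if "\<alpha> \<in> ?P" "\<beta> \<in> ?P" for \<alpha> \<beta>
    using sc_z[OF that] radd_pos[OF that] by blast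
  have bx: "br (sc (C \<alpha> \<beta>) (x (radd \<alpha> \<beta>))) (x \<gamma>) = sc (C \<alpha> \<beta> * C (radd \<alpha> \<beta>) \<gamma>) (x (radd (radd \<alpha> \<beta>) \<gamma>))"
    if "\<alpha> \<in> ?P" "\<beta> \<in> ?P" "\<gamma> \<in> ?P" for \<alpha> \<beta> \<gamma>
  proof (cases "C \<alpha> \<beta> = 0")
    case True then show ?thesis using lf(1)[of 0] by simp
  next
    case False
    then have "radd \<alpha> \<beta> \<in> ?P" using cpos that by blast
    then show ?thesis using lf(1) sc_c[OF _ that(3)] by (simp add: V.scale_scale)
  qed
  have xb: "br (x \<gamma>) (sc (C \<alpha> \<beta>) (x (radd \<alpha> \<beta>))) = sc (C \<alpha> \<beta> * C \<gamma> (radd \<alpha> \<beta>)) (x (radd \<gamma> (radd \<alpha> \<beta>)))"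
    if "\<alpha> \<in> ?P" "\<beta> \<in> ?P" "\<gamma> \<in> ?P" for \<alpha> \<beta> \<gamma>
  proof (cases "C \<alpha> \<beta> = 0")
    case True then show ?thesis using lf(2)[of _ 0] by simp
  next
    case False
    then have "radd \<alpha> \<beta> \<in> ?P" using cpos that by blast
    then show ?thesis using lf(2) sc_c[OF that(3)] by (simp add: V.scale_scale)
  qed
  show ?thesis
  proof
    fix \<alpha> \<beta> assume a: "\<alpha> \<in> S" "\<beta> \<in> S" "C \<alpha> \<beta> \<noteq> 0"
    then show "radd \<alpha> \<beta> \<in> S" using cpos S_pos S_closed by blast
  next
    fix \<alpha> \<beta> assume a: "\<alpha> \<in> S" "\<beta> \<in> S"
    then have p: "\<alpha> \<in> ?P" "\<beta> \<in> ?P" using S_pos by auto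
    have e: "sc (C \<alpha> \<beta>) (x (radd \<alpha> \<beta>)) = - sc (C \<beta> \<alpha>) (x (radd \<alpha> \<beta>))"
      using sc_c[OF p] sc_c[OF p(2) p(1)] lf(3)[of "x \<alpha>" "x \<beta>"] by (simp add: radd_comm)
    then have "sc (C \<alpha> \<beta> + C \<beta> \<alpha>) (x (radd \<alpha> \<beta>)) = 0"
      by (simp add: V.scale_left_distrib eq_neg_iff_add_eq_0)
    then have "C \<alpha> \<beta> + C \<beta> \<alpha> = 0 \<or> x (radd \<alpha> \<beta>) = 0" by simp
    then show "C \<alpha> \<beta> = - C \<beta> \<alpha>"
    proof
      assume "C \<alpha> \<beta> + C \<beta> \<alpha> = 0" then show ?thesis by (simp add: eq_neg_iff_add_eq_0)
    next
      assume "x (radd \<alpha> \<beta>) = 0"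
      then have "radd \<alpha> \<beta> \<notin> roots sc br H" using nz by blast
      then show ?thesis using sc_z[OF p] sc_z[OF p(2) p(1)] by (simp add: radd_comm)
    qed
  next
    fix a b y assume s: "a \<in> S" "b \<in> S" "y \<in> S"
    then have p: "a \<in> ?P" "b \<in> ?P" "y \<in> ?P" using S_pos by auto
    define s0 where "s0 = radd (radd a b) y"
    have r1: "radd (radd a y) b = s0" "radd a (radd b y) = s0" unfolding s0_def
      by (metis radd_assoc radd_comm)+
    have j: "br (br (x a) (x b)) (x y) = br (br (x a) (x y)) (x b) + br (x a) (br (x b) (x y))" by (rule lf(4))
    have j1: "br (br (x a) (x b)) (x y) = sc (C a b * C (radd a b) y) (x s0)"
      using sc_c[OF p(1,2)] bx[OF p(1,2,3)] by (simp add: s0_def)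
    have j2: "br (br (x a) (x y)) (x b) = sc (C a y * C (radd a y) b) (x s0)"
      using sc_c[OF p(1,3)] bx[OF p(1,3,2)] r1 by simp
    have j3: "br (x a) (br (x b) (x y)) = sc (C b y * C a (radd b y)) (x s0)"
      using sc_c[OF p(2,3)] xb[OF p(2,3,1)] r1 by simp
    have "sc (C a b * C (radd a b) y - (C a y * C (radd a y) b + C b y * C a (radd b y))) (x s0) = 0"
      using j j1 j2 j3 by (simp add: V.scale_left_diff_distrib V.scale_left_distrib)
    then have "C a b * C (radd a b) y - (C a y * C (radd a y) b + C b y * C a (radd b y)) = 0 \<or> x s0 = 0"
      by simp
    then show "C a b * C (radd a b) y = C a y * C (radd a y) b + C b y * C a (radd b y)"
    proof
      assume "x s0 = 0"
      then have ns: "s0 \<notin> roots sc br H" using nz by blast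
      have z1: "C a b * C (radd a b) y = 0"
      proof (cases "C a b = 0")
        case False
        then have "radd a b \<in> ?P" using cpos p by blast
        then show ?thesis using sc_z[OF _ p(3)] ns by (simp add: s0_def)
      qed simp
      have z2: "C a y * C (radd a y) b = 0"
      proof (cases "C a y = 0")
        case False
        then have "radd a y \<in> ?P" using cpos p by blast
        then show ?thesis using sc_z[OF _ p(2)] ns r1 by simp
      qed simp
      have z3: "C b y * C a (radd b y) = 0"
      proof (cases "C b y = 0")
        case False
        then have "radd b y \<in> ?P" using cpos p by blast
        then show ?thesis using sc_z[OF p(1)] ns r1 by simp
      qed simp
      show ?thesis by (simp only: z1 z2 z3) simp
    qed simp
  qed
qed


theorem lemmaA4:
  fixes sc :: "complex \<Rightarrow> 'g::ab_group_add \<Rightarrow> 'g"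
    and br :: "'g \<Rightarrow> 'g \<Rightarrow> 'g"
    and H :: "'g set"
    and Bs S :: "('g \<Rightarrow> complex) set"
    and x :: "('g \<Rightarrow> complex) \<Rightarrow> 'g"
    and C :: "('g \<Rightarrow> complex) \<Rightarrow> ('g \<Rightarrow> complex) \<Rightarrow> complex"
  assumes ss: "semisimple_lie sc br"
    and cartan: "cartan_subalgebra sc br H"
    and base: "is_base sc br H Bs"
    and rootvec: "\<forall>\<alpha>\<in>roots sc br H. x \<alpha> \<in> root_space sc br H \<alpha> \<and> x \<alpha> \<noteq> 0"
    and structconst: "\<forall>\<alpha>\<in>pos_roots sc br H Bs. \<forall>\<beta>\<in>pos_roots sc br H Bs.
           br (x \<alpha>) (x \<beta>) = sc (C \<alpha> \<beta>) (x (radd \<alpha> \<beta>))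
           \<and> (radd \<alpha> \<beta> \<notin> roots sc br H \<longrightarrow> C \<alpha> \<beta> = 0)"
    and S_ne: "S \<noteq> {}"
    and S_pos: "S \<subseteq> pos_roots sc br H Bs"
    and S_closed: "\<forall>\<alpha>\<in>S. \<forall>\<beta>\<in>S. radd \<alpha> \<beta> \<in> pos_roots sc br H Bs \<longrightarrow> radd \<alpha> \<beta> \<in> S"
  shows "\<exists>\<phi>. \<phi> \<in> ring_iso (U_minus S C) (U_tilde_minus S C)
             \<and> (\<forall>c. \<phi> (J_minus S C +>\<^bsub>word_ring (T_minus_carrier S)\<^esub> constw c)
                    = I_tilde S C +>\<^bsub>F_ring S\<^esub> constw c)"
  proof -
  have L: "lie_algebra sc br" using ss by (simp add: semisimple_lie_def)
  interpret LA S C by (rule LA_from_lie[OF L rootvec structconst S_pos S_closed])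
  show ?thesis by (rule main_iso)
qed

end
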